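(* Let $n\ge1$. As polynomials in the indeterminates $x$ and $y$ with coefficients in $\mathbb{Q}[\mathfrak{S}_n]$, \begin{align*} \rho(x)\rho^{(\ell)}(y)=\rho^{(\ell)}(y)\rho(x)&=\rho(xy),\\ \overline{\rho}(x)\rho^{(\ell)}(y)=\rho^{(\ell)}(y)\overline{\rho}(x)&=\overline{\rho}(xy),\\ \rho(x)\rho^{(r)}(y)=\rho^{(r)}(y)\overline{\rho}(x)&=\rho(xy),\\ \overline{\rho}(x)\rho^{(r)}(y)=\rho^{(r)}(y)\rho(x)&=\overline{\rho}(xy), \end{align*} where $\rho(x)=\sum_{\pi}\Omega'(\pi;x/2)\pi$, $\overline{\rho}(x)=\sum_\pi\overline{\Omega}'(\pi;x/2)\pi$, $\rho^{(\ell)}(x)=\sum_\pi\Omega^{(\ell)}(\pi;(x-1)/2)\pi$, $\rho^{(r)}(x)=\sum_\pi\Omega^{(r)}(\pi;(x-1)/2)\pi$, all sums over $\pi\in\mathfrak{S}_n$.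
   Context: $\mathfrak{S}_n$ is the symmetric group on $[n]$, permutations are words $(\pi(1),\dots,\pi(n))$, and multiplication in $\mathbb{Q}[\mathfrak{S}_n]$ is composition. Let $Z$ be a finite totally ordered set each of whose elements is declared "plus-type" or "minus-type". For $\pi\in\mathfrak{S}_n$ let $N(\pi;Z)$ be the number of sequences $(a_1,\dots,a_n)\in Z^n$ with $a_1\le\dots\le a_n$ such that for every $s\in[n-1]$: if $\pi(s)<\pi(s+1)$ then $a_s<a_{s+1}$ or ($a_s=a_{s+1}$ is plus-type); if $\pi(s)>\pi(s+1)$ then $a_s<a_{s+1}$ or ($a_s=a_{s+1}$ is minus-type). For a positive integer $k$ define: $\Omega'(\pi;k)=N(\pi;\{\bar1<1<\dots<\bar k<k\})$; $\overline{\Omega}'(\pi;k)=N(\pi;\{0<\bar1<1<\dots<\overline{k-1}<k-1<\bar k\})$; $\Omega^{(\ell)}(\pi;k)=N(\pi;\{0<\bar1<1<\dots<\bar k<k\})$; $\Omega^{(r)}(\pi;k)=N(\pi;\{\bar1<1<\dots<\bar k<k<\overline{k+1}\})$. Here $0$ and unbarred $j$ are plus-type, barred $\bar j$ are minus-type. Each is, as a function of $k$, the restriction of a unique polynomial with rational coefficients, denoted by the same symbol. *)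

theory Defs
  imports Main "HOL-Library.FuncSet" "HOL-Computational_Algebra.Polynomial"
    "HOL-Combinatorics.Permutations"
begin

(* A totally ordered typed set Z is a list of booleans, ordered by position;
   True = plus-type, False = minus-type. *)
definition Ncount :: "nat \<Rightarrow> (nat \<Rightarrow> nat) \<Rightarrow> bool list \<Rightarrow> nat" where
  "Ncount n \<pi> Z = card {a \<in> {1..n} \<rightarrow>\<^sub>E {..<length Z}.
      (\<forall>s\<in>{1..<n}. a s \<le> a (Suc s)) \<and>
      (\<forall>s\<in>{1..<n}. \<pi> s < \<pi> (Suc s) \<longrightarrow>
          a s < a (Suc s) \<or> (a s = a (Suc s) \<and> Z ! (a s))) \<and>
      (\<forall>s\<in>{1..<n}. \<pi> s > \<pi> (Suc s) \<longrightarrow>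
          a s < a (Suc s) \<or> (a s = a (Suc s) \<and> \<not> Z ! (a s)))}"

definition Zpairs :: "nat \<Rightarrow> bool list" where
  "Zpairs k = concat (replicate k [False, True])"

(* Omega' : {bar1<1<...<bar k<k} *)
definition Z_prime :: "nat \<Rightarrow> bool list" where "Z_prime k = Zpairs k"
(* Omega-bar' : {0<bar1<1<...<bar(k-1)<k-1<bar k} *)
definition Z_bar :: "nat \<Rightarrow> bool list" where "Z_bar k = True # Zpairs (k - 1) @ [False]"
(* Omega^(l) : {0<bar1<1<...<bar k<k} *)
definition Z_left :: "nat \<Rightarrow> bool list" where "Z_left k = True # Zpairs k"
(* Omega^(r) : {bar1<1<...<bar k<k<bar(k+1)} *)
definition Z_right :: "nat \<Rightarrow> bool list" where "Z_right k = Zpairs k @ [False]"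

definition omega_poly :: "nat \<Rightarrow> (nat \<Rightarrow> bool list) \<Rightarrow> (nat \<Rightarrow> nat) \<Rightarrow> rat poly" where
  "omega_poly n Zf \<pi> = (THE p. \<forall>k::nat. k \<ge> 1 \<longrightarrow> poly p (of_nat k) = of_nat (Ncount n \<pi> (Zf k)))"

(* bivariate polynomials Q[x,y] as rat poly poly: inner variable x, outer variable y *)
definition Xv :: "rat poly poly" where "Xv = [:[:0, 1:]:]"
definition Yv :: "rat poly poly" where "Yv = [:0, 1:]"
definition cst :: "rat \<Rightarrow> rat poly poly" where "cst c = [:[:c:]:]"

definition subst :: "rat poly \<Rightarrow> rat poly poly \<Rightarrow> rat poly poly" where
  "subst p t = poly (map_poly cst p) t"

(* elements of Q[S_n][x,y] = Q[x,y][S_n]: functions on permutations of {1..n} *)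
definition galg_mult :: "nat \<Rightarrow> ((nat \<Rightarrow> nat) \<Rightarrow> 'r::comm_ring_1)
     \<Rightarrow> ((nat \<Rightarrow> nat) \<Rightarrow> 'r) \<Rightarrow> (nat \<Rightarrow> nat) \<Rightarrow> 'r" where
  "galg_mult n a b \<sigma> = (\<Sum>\<tau>\<in>{p. p permutes {1..n}}. \<Sum>\<upsilon>\<in>{p. p permutes {1..n}}.
       if \<tau> \<circ> \<upsilon> = \<sigma> then a \<tau> * b \<upsilon> else 0)"

definition gen_series :: "nat \<Rightarrow> (nat \<Rightarrow> bool list) \<Rightarrow> rat poly poly
     \<Rightarrow> (nat \<Rightarrow> nat) \<Rightarrow> rat poly poly" where
  "gen_series n Zf t = (\<lambda>\<pi>. if \<pi> permutes {1..n} then subst (omega_poly n Zf \<pi>) t else 0)"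

definition rho :: "nat \<Rightarrow> rat poly poly \<Rightarrow> (nat \<Rightarrow> nat) \<Rightarrow> rat poly poly" where
  "rho n t = gen_series n Z_prime (cst (1/2) * t)"
definition rho_bar :: "nat \<Rightarrow> rat poly poly \<Rightarrow> (nat \<Rightarrow> nat) \<Rightarrow> rat poly poly" where
  "rho_bar n t = gen_series n Z_bar (cst (1/2) * t)"
definition rho_l :: "nat \<Rightarrow> rat poly poly \<Rightarrow> (nat \<Rightarrow> nat) \<Rightarrow> rat poly poly" where
  "rho_l n t = gen_series n Z_left (cst (1/2) * (t - 1))"
definition rho_r :: "nat \<Rightarrow> rat poly poly \<Rightarrow> (nat \<Rightarrow> nat) \<Rightarrow> rat poly poly" where
  "rho_r n t = gen_series n Z_right (cst (1/2) * (t - 1))"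

end

theory Submission
  imports Defs
begin

declare upt_Suc[simp del]

definition EE :: "nat \<Rightarrow> nat \<Rightarrow> (nat \<Rightarrow> nat) set" where
  "EE n L = {1..n} \<rightarrow>\<^sub>E {..<L}"

definition Cnd :: "nat \<Rightarrow> (nat \<Rightarrow> nat) \<Rightarrow> bool list \<Rightarrow> (nat \<Rightarrow> nat) \<Rightarrow> bool" where
  "Cnd n \<pi> Z a \<longleftrightarrow> (\<forall>s\<in>{1..<n}. a s \<le> a (Suc s)) \<and>
      (\<forall>s\<in>{1..<n}. \<pi> s < \<pi> (Suc s) \<longrightarrow>
          a s < a (Suc s) \<or> (a s = a (Suc s) \<and> Z ! (a s))) \<and>
      (\<forall>s\<in>{1..<n}. \<pi> s > \<pi> (Suc s) \<longrightarrow>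
          a s < a (Suc s) \<or> (a s = a (Suc s) \<and> \<not> Z ! (a s)))"

lemma Ncount_alt: "Ncount n \<pi> Z = card {a \<in> EE n (length Z). Cnd n \<pi> Z a}"
  by (simp add: Ncount_def EE_def Cnd_def)

lemma finite_EE[simp]: "finite (EE n L)"
  by (simp add: EE_def finite_PiE)

definition Cnd2 :: "nat \<Rightarrow> (nat \<Rightarrow> nat) \<Rightarrow> bool list \<Rightarrow> (nat \<Rightarrow> nat) \<Rightarrow> bool" where
  "Cnd2 n \<pi> Z a \<longleftrightarrow> (\<forall>s\<in>{1..<n}. a s \<le> a (Suc s)) \<and>
      (\<forall>s\<in>{1..<n}. a s = a (Suc s) \<longrightarrow> (\<pi> s < \<pi> (Suc s) \<longleftrightarrow> Z ! (a s)))"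

lemma Cnd_Cnd2:
  assumes "\<pi> permutes {1..n}"
  shows "Cnd n \<pi> Z a \<longleftrightarrow> Cnd2 n \<pi> Z a"
proof -
  have ne: "\<pi> s \<noteq> \<pi> (Suc s)" for s
    using permutes_inj[OF assms] by (metis injD n_not_Suc_n)
  have ne2: "\<pi> s < \<pi> (Suc s) \<or> \<pi> (Suc s) < \<pi> s" for s
    using ne[of s] by auto
  have pt: "((\<pi> s < \<pi> (Suc s) \<longrightarrow> a s < a (Suc s) \<or> (a s = a (Suc s) \<and> Z ! (a s))) \<and>
      (\<pi> s > \<pi> (Suc s) \<longrightarrow> a s < a (Suc s) \<or> (a s = a (Suc s) \<and> \<not> Z ! (a s)))) \<longleftrightarrow>
      (a s = a (Suc s) \<longrightarrow> (\<pi> s < \<pi> (Suc s) \<longleftrightarrow> Z ! (a s)))" if "a s \<le> a (Suc s)" for s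
    using ne2[of s] that by auto
  show ?thesis unfolding Cnd_def Cnd2_def
    using pt by blast
qed

lemma mono_adj:
  assumes "\<forall>s\<in>{1..<n}. a s \<le> a (Suc s)" "1 \<le> i" "i \<le> j" "j \<le> n"
  shows "a i \<le> (a j :: nat)"
  using assms(3,4)
proof (induction j rule: dec_induct)
  case base then show ?case by simp
next
  case (step m)
  then have "a m \<le> a (Suc m)" using assms(1,2) by auto
  with step show ?case by simp
qed

definition isstd :: "nat \<Rightarrow> bool list \<Rightarrow> (nat \<Rightarrow> nat) \<Rightarrow> (nat \<Rightarrow> nat) \<Rightarrow> bool" where
  "isstd n Z g \<pi> \<longleftrightarrow> \<pi> permutes {1..n} \<and> Cnd2 n \<pi> Z (g \<circ> \<pi>)"

definition key :: "nat \<Rightarrow> bool list \<Rightarrow> (nat \<Rightarrow> nat) \<Rightarrow> nat \<Rightarrow> nat" where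
  "key n Z g i = g i * (n+1) + (if Z ! (g i) then i else n - i)"

lemma mul_lt_aux: "(x::nat) < y \<Longrightarrow> r \<le> n \<Longrightarrow> x * (n+1) + r < y * (n+1) + r'"
proof -
  assume "x < y" "r \<le> n"
  then have "(x+1)*(n+1) \<le> y*(n+1)" by (intro mult_le_mono1) simp
  then show ?thesis using \<open>r \<le> n\<close> by (simp add: algebra_simps)
qed

lemma key_less_iff:
  assumes "u \<in> {1..n}" "v \<in> {1..n}"
  shows "key n Z g u < key n Z g v \<longleftrightarrow>
     g u < g v \<or> (g u = g v \<and> (if Z ! (g u) then u < v else v < u))"
proof -
  have r1: "(if Z ! (g u) then u else n - u) \<le> n" and r2: "(if Z ! (g v) then v else n - v) \<le> n"
    using assms by auto
  show ?thesis
  proof (cases "g u < g v")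
    case True then show ?thesis unfolding key_def using mul_lt_aux[OF True r1] by simp
  next
    case False
    show ?thesis
    proof (cases "g v < g u")
      case True
      then have "key n Z g v < key n Z g u" unfolding key_def using mul_lt_aux[OF True r2] by simp
      then show ?thesis using True False by simp
    next
      case False2: False
      then have "g u = g v" using False by simp
      then show ?thesis unfolding key_def using assms by auto
    qed
  qed
qed

lemma key_inj: "inj_on (key n Z g) {1..n}"
proof (rule inj_onI)
  fix u v assume uv: "u \<in> {1..n}" "v \<in> {1..n}" "key n Z g u = key n Z g v"
  show "u = v"
  proof (rule ccontr)
    assume "u \<noteq> v"
    then have "u < v \<or> v < u" by auto
    then have "key n Z g u < key n Z g v \<or> key n Z g v < key n Z g u"
      using key_less_iff[OF uv(1,2), of Z g] key_less_iff[OF uv(2,1), of Z g]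
      by (cases "g u < g v"; cases "g v < g u"; auto)
    with uv(3) show False by simp
  qed
qed

lemma isstd_key_adj:
  assumes "isstd n Z g \<pi>" "s \<in> {1..<n}"
  shows "key n Z g (\<pi> s) < key n Z g (\<pi> (Suc s))"
proof -
  have p: "\<pi> permutes {1..n}" using assms unfolding isstd_def by auto
  have in1: "\<pi> s \<in> {1..n}" "\<pi> (Suc s) \<in> {1..n}" using assms(2) permutes_in_image[OF p] by auto
  have c: "g (\<pi> s) \<le> g (\<pi> (Suc s))"
      "g (\<pi> s) = g (\<pi> (Suc s)) \<longrightarrow> (\<pi> s < \<pi> (Suc s) \<longleftrightarrow> Z ! g (\<pi> s))"
    using assms unfolding isstd_def Cnd2_def by auto
  have ne: "\<pi> s \<noteq> \<pi> (Suc s)"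
    using permutes_inj[OF p] by (metis injD n_not_Suc_n)
  show ?thesis unfolding key_less_iff[OF in1]
    using c ne by auto
qed


lemma strict_adj:
  assumes "\<forall>s\<in>{1..<n}. f s < f (Suc s)" "1 \<le> i" "i < j" "j \<le> n"
  shows "f i < (f j :: nat)"
  using assms(3,4)
proof (induction j rule: less_induct)
  case (less j)
  show ?case
  proof (cases "j = Suc i")
    case True then show ?thesis using assms(1,2) less.prems by auto
  next
    case False
    then obtain m where m: "j = Suc m" "i < m" using less.prems by (cases j) auto
    then have "f i < f m" using less by auto
    moreover have "f m < f (Suc m)" using assms(1,2) m less.prems by auto
    ultimately show ?thesis using m by simp
  qed
qed

lemma sorted_map_upt:
  fixes f :: "nat \<Rightarrow> nat"
  assumes "\<forall>s\<in>{1..<n}. f s < f (Suc s)"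
  shows "sorted_wrt (<) (map f [1..<Suc n])"
  unfolding sorted_wrt_iff_nth_less
  using strict_adj[OF assms] by auto

lemma isstd_list:
  assumes "isstd n Z g \<pi>"
  shows "map (key n Z g \<circ> \<pi>) [1..<Suc n] = sorted_list_of_set (key n Z g ` {1..n})"
proof -
  have p: "\<pi> permutes {1..n}" using assms unfolding isstd_def by auto
  have "sorted_wrt (<) (map (key n Z g \<circ> \<pi>) [1..<Suc n])"
    by (rule sorted_map_upt) (use isstd_key_adj[OF assms] in auto)
  moreover have "set (map (key n Z g \<circ> \<pi>) [1..<Suc n]) = key n Z g ` {1..n}"
    by (simp only: set_map set_upt atLeastLessThanSuc_atLeastAtMost image_comp[symmetric] permutes_image[OF p])
  moreover have "length (map (key n Z g \<circ> \<pi>) [1..<Suc n]) = card (key n Z g ` {1..n})"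
    using card_image[OF key_inj] by simp
  ultimately have "sorted_list_of_set (key n Z g ` {1..n}) = map (key n Z g \<circ> \<pi>) [1..<Suc n]"
    by (intro sorted_list_of_set_unique[THEN iffD1]) auto
  then show ?thesis by simp
qed

lemma isstd_unique:
  assumes "isstd n Z g \<pi>1" "isstd n Z g \<pi>2"
  shows "\<pi>1 = \<pi>2"
proof
  fix s
  have p1: "\<pi>1 permutes {1..n}" and p2: "\<pi>2 permutes {1..n}" using assms unfolding isstd_def by auto
  show "\<pi>1 s = \<pi>2 s"
  proof (cases "s \<in> {1..n}")
    case True
    have eq: "map (key n Z g \<circ> \<pi>1) [1..<Suc n] = map (key n Z g \<circ> \<pi>2) [1..<Suc n]"
      using isstd_list[OF assms(1)] isstd_list[OF assms(2)] by simp
    have "key n Z g (\<pi>1 s) = key n Z g (\<pi>2 s)" 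
    proof -
      have l: "s - 1 < length [1..<Suc n]" using True by auto
      have "[1..<Suc n] ! (s - 1) = s" using True by (subst nth_upt) auto
      then show ?thesis using arg_cong[OF eq, of "\<lambda>l. l ! (s - 1)"] nth_map[OF l]
        by (metis comp_apply)
    qed
    moreover have "\<pi>1 s \<in> {1..n}" "\<pi>2 s \<in> {1..n}"
      using True permutes_in_image[OF p1] permutes_in_image[OF p2] by auto
    ultimately show ?thesis using key_inj[of n Z g] by (auto dest: inj_onD)
  next
    case False
    then show ?thesis using p1 p2 by (simp add: permutes_not_in)
  qed
qed

lemma isstd_exists: "\<exists>\<pi>. isstd n Z g \<pi>"
proof -
  define K where "K = key n Z g ` {1..n}"
  define ks where "ks = sorted_list_of_set K"
  have cK: "card K = n" unfolding K_def using card_image[OF key_inj] by simp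
  have fK: "finite K" unfolding K_def by simp
  have ks: "sorted_wrt (<) ks" "set ks = K" "length ks = n"
    using sorted_list_of_set_unique[OF fK, of ks] cK unfolding ks_def by auto
  have dks: "distinct ks" using ks(1) by (simp add: strict_sorted_iff)
  define \<pi> where "\<pi> s = (if s \<in> {1..n} then inv_into {1..n} (key n Z g) (ks ! (s - 1)) else s)" for s
  have b1: "bij_betw (\<lambda>s. s - 1) {1..n} {..<n}"
    by (rule bij_betw_byWitness[where f'="\<lambda>s. s + 1"]) auto
  have b2: "bij_betw ((!) ks) {..<n} K" using bij_betw_nth[OF dks] ks by auto
  have b3: "bij_betw (inv_into {1..n} (key n Z g)) K {1..n}"
    unfolding K_def by (rule bij_betw_inv_into) (rule bij_betw_imageI[OF key_inj refl])
  have "bij_betw (inv_into {1..n} (key n Z g) \<circ> (!) ks \<circ> (\<lambda>s. s - 1)) {1..n} {1..n}"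
    using bij_betw_trans[OF bij_betw_trans[OF b1 b2] b3] by (simp add: comp_assoc)
  then have "bij_betw \<pi> {1..n} {1..n}"
    by (rule bij_betw_cong[THEN iffD1, rotated]) (auto simp: \<pi>_def)
  then have p: "\<pi> permutes {1..n}"
    by (rule bij_imp_permutes) (auto simp: \<pi>_def)
  have kp: "key n Z g (\<pi> s) = ks ! (s - 1)" if "s \<in> {1..n}" for s
  proof -
    have "ks ! (s - 1) \<in> K" using that ks nth_mem[of "s - 1" ks] by auto
    then show ?thesis using that unfolding \<pi>_def K_def by (simp add: f_inv_into_f)
  qed
  have "Cnd2 n \<pi> Z (g \<circ> \<pi>)"
    unfolding Cnd2_def
  proof (intro conjI ballI impI)
    fix s assume s: "s \<in> {1..<n}"
    have in1: "\<pi> s \<in> {1..n}" "\<pi> (Suc s) \<in> {1..n}" using s permutes_in_image[OF p] by auto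
    have "ks ! (s - 1) < ks ! (Suc s - 1)"
      using ks(1,3) s unfolding sorted_wrt_iff_nth_less by auto
    then have lt: "key n Z g (\<pi> s) < key n Z g (\<pi> (Suc s))" using kp s by auto
    then show "(g \<circ> \<pi>) s \<le> (g \<circ> \<pi>) (Suc s)" unfolding key_less_iff[OF in1] by auto
    assume "(g \<circ> \<pi>) s = (g \<circ> \<pi>) (Suc s)"
    moreover have ne: "\<pi> s \<noteq> \<pi> (Suc s)"
      using permutes_inj[OF p] by (metis injD n_not_Suc_n)
    ultimately show "(\<pi> s < \<pi> (Suc s)) = Z ! (g \<circ> \<pi>) s"
      using lt unfolding key_less_iff[OF in1] by (auto split: if_split_asm)
  qed
  then show ?thesis using p unfolding isstd_def by auto
qed

definition std :: "nat \<Rightarrow> bool list \<Rightarrow> (nat \<Rightarrow> nat) \<Rightarrow> (nat \<Rightarrow> nat)" where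
  "std n Z g = (THE \<pi>. isstd n Z g \<pi>)"

lemma std_isstd: "isstd n Z g (std n Z g)"
  unfolding std_def using isstd_exists isstd_unique by (metis theI)

lemma std_eq: "isstd n Z g \<pi> \<longleftrightarrow> std n Z g = \<pi>"
  using std_isstd isstd_unique by metis

lemma std_permutes: "std n Z g permutes {1..n}"
  using std_isstd unfolding isstd_def by auto


lemma chain_lt:
  assumes "\<forall>s. i \<le> s \<longrightarrow> s < j \<longrightarrow> f s < f (Suc s)" "i < j"
  shows "f i < (f j :: nat)"
  using assms
proof (induction j)
  case 0 then show ?case by simp
next
  case (Suc j)
  have st: "f j < f (Suc j)" using Suc.prems by auto
  show ?case
  proof (cases "i = j")
    case True then show ?thesis using st by simp
  next
    case False then have "f i < f j" using Suc by auto
    then show ?thesis using st by simp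
  qed
qed

lemma chain_gt:
  assumes "\<forall>s. i \<le> s \<longrightarrow> s < j \<longrightarrow> f (Suc s) < f s" "i < j"
  shows "f j < (f i :: nat)"
  using assms
proof (induction j)
  case 0 then show ?case by simp
next
  case (Suc j)
  have st: "f (Suc j) < f j" using Suc.prems by auto
  show ?case
  proof (cases "i = j")
    case True then show ?thesis using st by simp
  next
    case False then have "f j < f i" using Suc by auto
    then show ?thesis using st by simp
  qed
qed

lemma chain_eq:
  assumes c: "Cnd2 n \<tau> X a" and p: "\<tau> permutes {1..n}"
    and uv: "1 \<le> u" "u < v" "v \<le> n" and eq: "a u = a v"
  shows "\<tau> u < \<tau> v \<longleftrightarrow> X ! (a u)"
proof -
  have mono: "\<forall>s\<in>{1..<n}. a s \<le> a (Suc s)" using c unfolding Cnd2_def by blast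
  have const: "a t = a u" if "u \<le> t" "t \<le> v" for t
  proof -
    have "a u \<le> a t" using mono_adj[OF mono uv(1) that(1)] that(2) uv(3) by simp
    moreover have "a t \<le> a v" using mono_adj[OF mono _ that(2) uv(3)] that(1) uv(1) by simp
    ultimately show ?thesis using eq by simp
  qed
  have step: "\<tau> t < \<tau> (Suc t) \<longleftrightarrow> X ! (a u)" if "u \<le> t" "t < v" for t
  proof -
    have e: "a t = a (Suc t)" using const[of t] const[of "Suc t"] that by simp
    have "t \<in> {1..<n}" using that uv by simp
    then have "a t = a (Suc t) \<longrightarrow> (\<tau> t < \<tau> (Suc t) \<longleftrightarrow> X ! (a t))" using c unfolding Cnd2_def by blast
    then show ?thesis using e const[of t] that by simp
  qed
  have ne: "\<tau> s \<noteq> \<tau> (Suc s)" for s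
    using permutes_inj[OF p] by (metis injD n_not_Suc_n)
  show ?thesis
  proof (cases "X ! (a u)")
    case True
    then have "\<forall>s. u \<le> s \<longrightarrow> s < v \<longrightarrow> \<tau> s < \<tau> (Suc s)" using step by blast
    then have "\<tau> u < \<tau> v" using chain_lt[of u v \<tau>] uv by blast
    then show ?thesis using True by simp
  next
    case False
    have "\<tau> (Suc s) < \<tau> s" if "u \<le> s" "s < v" for s
      using step[OF that] False ne[of s] by linarith
    then have "\<tau> v < \<tau> u" using chain_gt[of u v \<tau>] uv by blast
    then show ?thesis using False by simp
  qed
qed
lemma EE_comp_perm:
  assumes a: "a \<in> EE n L" and p: "p permutes {1..n}"
  shows "a \<circ> p \<in> EE n L"
  unfolding EE_def PiE_iff
proof (intro conjI ballI)
  fix x assume "x \<in> {1..n}"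
  then have "p x \<in> {1..n}" using permutes_in_image[OF p] by simp
  then show "(a \<circ> p) x \<in> {..<L}" using a unfolding EE_def by auto
next
  show "a \<circ> p \<in> extensional {1..n}"
  unfolding extensional_def
  proof (intro CollectI allI impI)
    fix x assume "x \<notin> {1..n}"
    then have "p x = x" using permutes_not_in[OF p] by simp
    then show "(a \<circ> p) x = undefined" using a \<open>x \<notin> {1..n}\<close> unfolding EE_def by (simp add: PiE_def extensional_def)
  qed
qed

lemma Ncount_std:
  assumes p: "\<pi> permutes {1..n}"
  shows "Ncount n \<pi> Z = card {g \<in> EE n (length Z). std n Z g = \<pi>}"
proof -
  have "bij_betw (\<lambda>a. a \<circ> inv \<pi>) {a \<in> EE n (length Z). Cnd n \<pi> Z a} {g \<in> EE n (length Z). std n Z g = \<pi>}"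
  proof (rule bij_betw_byWitness[where f'="\<lambda>g. g \<circ> \<pi>"])
    show "\<forall>a\<in>{a \<in> EE n (length Z). Cnd n \<pi> Z a}. a \<circ> inv \<pi> \<circ> \<pi> = a"
      by (intro ballI ext) (simp add: permutes_inverses[OF p])
    show "\<forall>a'\<in>{g \<in> EE n (length Z). std n Z g = \<pi>}. a' \<circ> \<pi> \<circ> inv \<pi> = a'"
      by (intro ballI ext) (simp add: permutes_inverses[OF p])
    have pi: "inv \<pi> permutes {1..n}" using permutes_inv[OF p] .
    show "(\<lambda>a. a \<circ> inv \<pi>) ` {a \<in> EE n (length Z). Cnd n \<pi> Z a} \<subseteq> {g \<in> EE n (length Z). std n Z g = \<pi>}"
    proof (rule image_subsetI)
      fix a assume "a \<in> {a \<in> EE n (length Z). Cnd n \<pi> Z a}"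
      then have a: "a \<in> EE n (length Z)" "Cnd n \<pi> Z a" by auto
      have "a \<circ> inv \<pi> \<in> EE n (length Z)"
        using EE_comp_perm[OF a(1) pi] .
      have "a \<circ> inv \<pi> \<circ> \<pi> = a"
        by (intro ext) (simp add: permutes_inverses[OF p])
      then have "isstd n Z (a \<circ> inv \<pi>) \<pi>" unfolding isstd_def using p a(2) Cnd_Cnd2[OF p] by simp
      then have "std n Z (a \<circ> inv \<pi>) = \<pi>" using std_eq by blast
      then show "a \<circ> inv \<pi> \<in> {g \<in> EE n (length Z). std n Z g = \<pi>}" using \<open>a \<circ> inv \<pi> \<in> EE n (length Z)\<close> by blast
    qed
    show "(\<lambda>g. g \<circ> \<pi>) ` {g \<in> EE n (length Z). std n Z g = \<pi>} \<subseteq> {a \<in> EE n (length Z). Cnd n \<pi> Z a}"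
    proof (rule image_subsetI)
      fix g assume "g \<in> {g \<in> EE n (length Z). std n Z g = \<pi>}"
      then have g: "g \<in> EE n (length Z)" "\<pi> = std n Z g" by auto
      have "g \<circ> \<pi> \<in> EE n (length Z)"
        using EE_comp_perm[OF g(1) p] .
      have "isstd n Z g \<pi>" using g(2) std_eq by blast
      then have "Cnd n \<pi> Z (g \<circ> \<pi>)" unfolding isstd_def using Cnd_Cnd2[OF p] by simp
      then show "g \<circ> \<pi> \<in> {a \<in> EE n (length Z). Cnd n \<pi> Z a}" using \<open>g \<circ> \<pi> \<in> EE n (length Z)\<close> by blast
    qed
  qed
  then show ?thesis unfolding Ncount_alt by (rule bij_betw_same_card)
qed


definition enc :: "bool list \<Rightarrow> bool list \<Rightarrow> nat \<Rightarrow> nat \<Rightarrow> nat" where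
  "enc X Y j p = j * length X + (if Y ! j then p else length X - 1 - p)"
definition dec2 :: "bool list \<Rightarrow> bool list \<Rightarrow> nat \<Rightarrow> nat" where
  "dec2 X Y c = (if Y ! (c div length X) then c mod length X else length X - 1 - c mod length X)"
definition prodZ :: "bool list \<Rightarrow> bool list \<Rightarrow> bool list" where
  "prodZ X Y = map (\<lambda>c. X ! dec2 X Y c = Y ! (c div length X)) [0..<length X * length Y]"

lemma length_prodZ[simp]: "length (prodZ X Y) = length X * length Y"
  by (simp add: prodZ_def)

lemma dm: assumes "q < (L::nat)" shows "(j*L + q) div L = j" "(j*L + q) mod L = q"
proof -
  have "L \<noteq> 0" using assms by simp
  then show "(j*L + q) div L = j" "(j*L + q) mod L = q" using assms by (simp_all add: add.commute[of "j*L"])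
qed

lemma enc_div:
  assumes "p < length X" shows "enc X Y j p div length X = j" and "dec2 X Y (enc X Y j p) = p"
proof -
  have q: "(if Y ! j then p else length X - 1 - p) < length X" using assms by auto
  have d: "enc X Y j p div length X = j" unfolding enc_def using dm(1)[OF q] by simp
  show "enc X Y j p div length X = j" by (rule d)
  have m: "enc X Y j p mod length X = (if Y ! j then p else length X - 1 - p)"
    unfolding enc_def using dm(2)[OF q] by simp
  show "dec2 X Y (enc X Y j p) = p" unfolding dec2_def d m using assms by auto
qed

lemma enc_lt:
  assumes "j < length Y" "p < length X" shows "enc X Y j p < length X * length Y"
proof -
  have q: "(if Y ! j then p else length X - 1 - p) < length X" using assms by auto
  have "enc X Y j p < j * length X + length X" unfolding enc_def using q by simp
  also have "\<dots> = (j + 1) * length X" by simp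
  also have "\<dots> \<le> length Y * length X" using assms(1) by (intro mult_le_mono1) simp
  finally show ?thesis by (simp add: mult.commute)
qed

lemma dec2_lt: "0 < length X \<Longrightarrow> dec2 X Y c < length X"
  unfolding dec2_def by auto

lemma enc_dec:
  assumes "0 < length X" shows "enc X Y (c div length X) (dec2 X Y c) = c"
proof -
  have m: "c mod length X < length X" using assms by simp
  show ?thesis unfolding enc_def dec2_def using m by (auto simp: algebra_simps)
qed

lemma prodZ_enc:
  assumes "j < length Y" "p < length X"
  shows "prodZ X Y ! enc X Y j p = (X ! p = Y ! j)"
  using enc_lt[OF assms] enc_div[OF assms(2)] unfolding prodZ_def by simp

lemma enc_inj:
  assumes "p < length X" "p' < length X" "enc X Y j p = enc X Y j' p'"
  shows "j = j' \<and> p = p'"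
  using enc_div[OF assms(1)] enc_div[OF assms(2)] assms(3) by metis

lemma enc_less_j:
  assumes "j < j'" "p < length X"
  shows "enc X Y j p < enc X Y j' p'"
proof -
  have q: "(if Y ! j then p else length X - 1 - p) < length X" using assms by auto
  have "enc X Y j p < j * length X + length X" unfolding enc_def using q by simp
  also have "\<dots> = (j + 1) * length X" by simp
  also have "\<dots> \<le> j' * length X" using assms(1) by (intro mult_le_mono1) simp
  also have "\<dots> \<le> enc X Y j' p'" unfolding enc_def by simp
  finally show ?thesis .
qed

definition Phi :: "nat \<Rightarrow> bool list \<Rightarrow> bool list \<Rightarrow> (nat \<Rightarrow> nat) \<Rightarrow> (nat \<Rightarrow> nat) \<Rightarrow> nat \<Rightarrow> nat" where
  "Phi n X Y g h = (\<lambda>i. if i \<in> {1..n} then enc X Y (h (inv (std n X g) i)) (g i) else undefined)"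

lemma EE_val: "g \<in> EE n L \<Longrightarrow> i \<in> {1..n} \<Longrightarrow> g i < L"
  unfolding EE_def by auto

lemma EE_out: "g \<in> EE n L \<Longrightarrow> i \<notin> {1..n} \<Longrightarrow> g i = undefined"
  unfolding EE_def by (auto simp: PiE_def extensional_def)

lemma EE_I: "(\<And>i. i \<in> {1..n} \<Longrightarrow> g i < L) \<Longrightarrow> (\<And>i. i \<notin> {1..n} \<Longrightarrow> g i = undefined) \<Longrightarrow> g \<in> EE n L"
  unfolding EE_def by (auto simp: PiE_def extensional_def)

lemma Phi_std:
  assumes g: "g \<in> EE n (length X)" and h: "h \<in> EE n (length Y)"
  shows "isstd n (prodZ X Y) (Phi n X Y g h) (std n X g \<circ> std n Y h)"
proof -
  define \<tau> where "\<tau> = std n X g"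
  define \<upsilon> where "\<upsilon> = std n Y h"
  have pt: "\<tau> permutes {1..n}" and pu: "\<upsilon> permutes {1..n}" unfolding \<tau>_def \<upsilon>_def by (rule std_permutes)+
  have ca: "Cnd2 n \<tau> X (g \<circ> \<tau>)" using std_isstd[of n X g] unfolding isstd_def \<tau>_def by auto
  have cb: "Cnd2 n \<upsilon> Y (h \<circ> \<upsilon>)" using std_isstd[of n Y h] unfolding isstd_def \<upsilon>_def by auto
  have ps: "\<tau> \<circ> \<upsilon> permutes {1..n}" using permutes_compose[OF pu pt] .
  define G where "G = Phi n X Y g h"
  have Gv: "G (\<tau> (\<upsilon> s)) = enc X Y (h (\<upsilon> s)) (g (\<tau> (\<upsilon> s)))" if "s \<in> {1..n}" for s
  proof -
    have "\<upsilon> s \<in> {1..n}" using permutes_in_image[OF pu] that by simp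
    then have "\<tau> (\<upsilon> s) \<in> {1..n}" using permutes_in_image[OF pt] by simp
    then show ?thesis unfolding G_def Phi_def \<tau>_def[symmetric]
      using permutes_inverses(2)[OF pt] by simp
  qed
  have "Cnd2 n (\<tau> \<circ> \<upsilon>) (prodZ X Y) (G \<circ> (\<tau> \<circ> \<upsilon>))"
    unfolding Cnd2_def
  proof (intro conjI ballI impI)
    fix s assume s: "s \<in> {1..<n}"
    define u where "u = \<upsilon> s"
    define v where "v = \<upsilon> (Suc s)"
    define j where "j = h u"
    define j' where "j' = h v"
    define p where "p = g (\<tau> u)"
    define p' where "p' = g (\<tau> v)"
    have s1: "s \<in> {1..n}" "Suc s \<in> {1..n}" using s by auto
    have uv: "u \<in> {1..n}" "v \<in> {1..n}" unfolding u_def v_def using permutes_in_image[OF pu] s1 by auto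
    have tuv: "\<tau> u \<in> {1..n}" "\<tau> v \<in> {1..n}" using permutes_in_image[OF pt] uv by auto
    have plt: "p < length X" "p' < length X" unfolding p_def p'_def using EE_val[OF g] tuv by auto
    have jlt: "j < length Y" "j' < length Y" unfolding j_def j'_def using EE_val[OF h] uv by auto
    have Gs: "(G \<circ> (\<tau> \<circ> \<upsilon>)) s = enc X Y j p" "(G \<circ> (\<tau> \<circ> \<upsilon>)) (Suc s) = enc X Y j' p'"
      using Gv s1 unfolding j_def j'_def p_def p'_def u_def v_def by auto
    have jj: "j \<le> j'" using cb s unfolding Cnd2_def j_def j'_def u_def v_def by auto
    have jeq: "j = j' \<Longrightarrow> (u < v \<longleftrightarrow> Y ! j)"
      using cb s unfolding Cnd2_def j_def j'_def u_def v_def by auto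
    have mono_a: "\<forall>s\<in>{1..<n}. (g \<circ> \<tau>) s \<le> (g \<circ> \<tau>) (Suc s)" using ca unfolding Cnd2_def by blast
    have ne: "u \<noteq> v" unfolding u_def v_def using permutes_inj[OF pu] by (metis injD n_not_Suc_n)
    show "(G \<circ> (\<tau> \<circ> \<upsilon>)) s \<le> (G \<circ> (\<tau> \<circ> \<upsilon>)) (Suc s)"
      unfolding Gs
    proof (cases "j < j'")
      case True then show "enc X Y j p \<le> enc X Y j' p'" using enc_less_j[OF True plt(1), of Y p'] by simp
    next
      case False
      then have e: "j = j'" using jj by simp
      show "enc X Y j p \<le> enc X Y j' p'"
      proof (cases "Y ! j")
        case True
        then have "u < v" using jeq[OF e] by simp
        then have "p \<le> p'" unfolding p_def p'_def using mono_adj[OF mono_a, of u v] uv by auto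
        then show ?thesis unfolding enc_def using e True by simp
      next
        case False
        then have "v < u" using jeq[OF e] ne by auto
        then have "p' \<le> p" unfolding p_def p'_def using mono_adj[OF mono_a, of v u] uv by auto
        then show ?thesis unfolding enc_def using e False plt by simp
      qed
    qed
    assume "(G \<circ> (\<tau> \<circ> \<upsilon>)) s = (G \<circ> (\<tau> \<circ> \<upsilon>)) (Suc s)"
    then have "enc X Y j p = enc X Y j' p'" unfolding Gs .
    then have e: "j = j'" "p = p'" using enc_inj[OF plt] by auto
    have val: "prodZ X Y ! ((G \<circ> (\<tau> \<circ> \<upsilon>)) s) = (X ! p = Y ! j)"
      unfolding Gs using prodZ_enc[OF jlt(1) plt(1)] .
    have "(\<tau> u < \<tau> v) = (X ! p = Y ! j)"
    proof (cases "Y ! j")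
      case True
      then have "u < v" using jeq[OF e(1)] by simp
      then have "(\<tau> u < \<tau> v) = X ! ((g \<circ> \<tau>) u)"
        using chain_eq[OF ca pt, of u v] uv e(2) unfolding p_def p'_def by auto
      then show ?thesis using True unfolding p_def by simp
    next
      case False
      then have "v < u" using jeq[OF e(1)] ne by auto
      then have "(\<tau> v < \<tau> u) = X ! ((g \<circ> \<tau>) v)"
        using chain_eq[OF ca pt, of v u] uv e(2) unfolding p_def p'_def by auto
      moreover have "\<tau> u \<noteq> \<tau> v" using ne permutes_inj[OF pt] by (metis injD)
      ultimately show ?thesis using False e(2) unfolding p_def p'_def by auto
    qed
    then show "((\<tau> \<circ> \<upsilon>) s < (\<tau> \<circ> \<upsilon>) (Suc s)) = prodZ X Y ! (G \<circ> (\<tau> \<circ> \<upsilon>)) s"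
      unfolding val u_def v_def by simp
  qed
  then show ?thesis unfolding isstd_def G_def \<tau>_def \<upsilon>_def using ps \<tau>_def \<upsilon>_def by simp
qed


definition Psi :: "nat \<Rightarrow> bool list \<Rightarrow> bool list \<Rightarrow> (nat \<Rightarrow> nat) \<Rightarrow> (nat \<Rightarrow> nat) \<times> (nat \<Rightarrow> nat)" where
  "Psi n X Y G = (let g = (\<lambda>i. if i \<in> {1..n} then dec2 X Y (G i) else undefined)
     in (g, \<lambda>j. if j \<in> {1..n} then G (std n X g j) div length X else undefined))"

lemma prod_bij:
  assumes LX: "0 < length X"
  shows "card {gh \<in> EE n (length X) \<times> EE n (length Y). std n X (fst gh) \<circ> std n Y (snd gh) = \<sigma>}
       = card {G \<in> EE n (length (prodZ X Y)). std n (prodZ X Y) G = \<sigma>}"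
proof -
  have phi_in: "Phi n X Y g h \<in> EE n (length (prodZ X Y))" if g: "g \<in> EE n (length X)" and h: "h \<in> EE n (length Y)" for g h
  proof (rule EE_I)
    fix i assume i: "i \<in> {1..n}"
    have "inv (std n X g) i \<in> {1..n}" using permutes_in_image[OF permutes_inv[OF std_permutes]] i by simp
    then show "Phi n X Y g h i < length (prodZ X Y)"
      unfolding Phi_def using i enc_lt EE_val[OF g i] EE_val[OF h] by simp
  qed (auto simp: Phi_def)
  have phi_std: "std n (prodZ X Y) (Phi n X Y g h) = std n X g \<circ> std n Y h"
    if g: "g \<in> EE n (length X)" and h: "h \<in> EE n (length Y)" for g h
    using Phi_std[OF g h] std_eq by blast
  have psi_phi: "Psi n X Y (Phi n X Y g h) = (g, h)" if g: "g \<in> EE n (length X)" and h: "h \<in> EE n (length Y)" for g h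
  proof -
    define g' where "g' = (\<lambda>i. if i \<in> {1..n} then dec2 X Y (Phi n X Y g h i) else undefined)"
    have gg: "g' = g"
    proof
      fix i show "g' i = g i"
        using EE_out[OF g, of i] enc_div(2)[OF EE_val[OF g]] unfolding g'_def Phi_def by auto
    qed
    have hh: "(\<lambda>j. if j \<in> {1..n} then Phi n X Y g h (std n X g' j) div length X else undefined) = h"
    proof
      fix j
      show "(if j \<in> {1..n} then Phi n X Y g h (std n X g' j) div length X else undefined) = h j"
      proof (cases "j \<in> {1..n}")
        case True
        have "std n X g j \<in> {1..n}" using permutes_in_image[OF std_permutes] True by simp
        then show ?thesis using True gg unfolding Phi_def
          using enc_div(1)[OF EE_val[OF g]] permutes_inverses(2)[OF std_permutes] by simp
      next
        case False then show ?thesis using EE_out[OF h, of j] by auto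
      qed
    qed
    have g'': "(\<lambda>i. if i \<in> {1..n} then dec2 X Y (Phi n X Y g h i) else undefined) = g" using gg unfolding g'_def .
    show ?thesis using hh[unfolded gg] unfolding Psi_def Let_def g'' by simp
  qed
  have psi_in: "Psi n X Y G \<in> EE n (length X) \<times> EE n (length Y)" if G: "G \<in> EE n (length (prodZ X Y))" for G
  proof -
    define g where "g = (\<lambda>i. if i \<in> {1..n} then dec2 X Y (G i) else undefined)"
    have "g \<in> EE n (length X)" by (rule EE_I) (auto simp: g_def dec2_lt[OF LX])
    moreover have "(\<lambda>j. if j \<in> {1..n} then G (std n X g j) div length X else undefined) \<in> EE n (length Y)"
    proof (rule EE_I)
      fix j assume j: "j \<in> {1..n}"
      have "std n X g j \<in> {1..n}" using permutes_in_image[OF std_permutes] j by simp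
      then have "G (std n X g j) < length X * length Y" using EE_val[OF G] by simp
      then show "(if j \<in> {1..n} then G (std n X g j) div length X else undefined) < length Y"
        using j LX by (simp add: div_less_iff_less_mult mult.commute)
    qed auto
    ultimately show ?thesis unfolding Psi_def Let_def g_def[symmetric] by simp
  qed
  have phi_psi: "case_prod (Phi n X Y) (Psi n X Y G) = G" if G: "G \<in> EE n (length (prodZ X Y))" for G
  proof -
    define g where "g = (\<lambda>i. if i \<in> {1..n} then dec2 X Y (G i) else undefined)"
    define h where "h = (\<lambda>j. if j \<in> {1..n} then G (std n X g j) div length X else undefined)"
    have "Phi n X Y g h = G"
    proof
      fix i show "Phi n X Y g h i = G i"
      proof (cases "i \<in> {1..n}")
        case True
        have ii: "inv (std n X g) i \<in> {1..n}" using permutes_in_image[OF permutes_inv[OF std_permutes]] True by simp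
        have "std n X g (inv (std n X g) i) = i" using permutes_inverses(1)[OF std_permutes] by simp
        then have "h (inv (std n X g) i) = G i div length X" unfolding h_def using ii by simp
        then show ?thesis unfolding Phi_def using True enc_dec[OF LX] by (simp add: g_def)
      next
        case False then show ?thesis using EE_out[OF G, of i] by (auto simp add: Phi_def)
      qed
    qed
    then show ?thesis unfolding Psi_def Let_def g_def[symmetric] h_def[symmetric] by simp
  qed
  have "bij_betw (case_prod (Phi n X Y))
     {gh \<in> EE n (length X) \<times> EE n (length Y). std n X (fst gh) \<circ> std n Y (snd gh) = \<sigma>}
     {G \<in> EE n (length (prodZ X Y)). std n (prodZ X Y) G = \<sigma>}"
  proof (rule bij_betw_byWitness[where f'="Psi n X Y"])
    show "\<forall>a\<in>{gh \<in> EE n (length X) \<times> EE n (length Y). std n X (fst gh) \<circ> std n Y (snd gh) = \<sigma>}.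
        Psi n X Y (case a of (x, xa) \<Rightarrow> Phi n X Y x xa) = a"
      using psi_phi by auto
    show "\<forall>a'\<in>{G \<in> EE n (length (prodZ X Y)). std n (prodZ X Y) G = \<sigma>}. (case Psi n X Y a' of (x, xa) \<Rightarrow> Phi n X Y x xa) = a'"
      using phi_psi by auto
    show "(\<lambda>(x, y). Phi n X Y x y) ` {gh \<in> EE n (length X) \<times> EE n (length Y). std n X (fst gh) \<circ> std n Y (snd gh) = \<sigma>}
      \<subseteq> {G \<in> EE n (length (prodZ X Y)). std n (prodZ X Y) G = \<sigma>}"
      using phi_in phi_std by auto
    show "Psi n X Y ` {G \<in> EE n (length (prodZ X Y)). std n (prodZ X Y) G = \<sigma>}
      \<subseteq> {gh \<in> EE n (length X) \<times> EE n (length Y). std n X (fst gh) \<circ> std n Y (snd gh) = \<sigma>}"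
    proof (rule image_subsetI)
      fix G assume "G \<in> {G \<in> EE n (length (prodZ X Y)). std n (prodZ X Y) G = \<sigma>}"
      then have G: "G \<in> EE n (length (prodZ X Y))" "std n (prodZ X Y) G = \<sigma>" by auto
      obtain g h where gh: "Psi n X Y G = (g, h)" by fastforce
      have ing: "g \<in> EE n (length X)" "h \<in> EE n (length Y)" using psi_in[OF G(1)] gh by auto
      have "Phi n X Y g h = G" using phi_psi[OF G(1)] gh by simp
      then have "std n X g \<circ> std n Y h = \<sigma>" using phi_std[OF ing] G(2) by simp
      then show "Psi n X Y G \<in> {gh \<in> EE n (length X) \<times> EE n (length Y). std n X (fst gh) \<circ> std n Y (snd gh) = \<sigma>}"
        using gh ing by simp
    qed
  qed
  then show ?thesis by (rule bij_betw_same_card)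
qed

lemma sum_group_card:
  fixes F :: "'b \<Rightarrow> nat"
  assumes "finite A" "finite B" "f ` A \<subseteq> B"
  shows "(\<Sum>x\<in>A. F (f x)) = (\<Sum>y\<in>B. card {x\<in>A. f x = y} * F y)"
proof -
  have "(\<Sum>x\<in>A. F (f x)) = (\<Sum>y\<in>B. \<Sum>x\<in>{x\<in>A. f x = y}. F (f x))"
    using sum.group[OF assms, of "\<lambda>x. F (f x)"] by simp
  also have "\<dots> = (\<Sum>y\<in>B. card {x\<in>A. f x = y} * F y)"
    by (intro sum.cong refl) simp
  finally show ?thesis .
qed

lemma prod_count:
  assumes LX: "0 < length X" and s: "\<sigma> permutes {1..n}"
  shows "(\<Sum>\<tau>\<in>{p. p permutes {1..n}}. \<Sum>\<upsilon>\<in>{p. p permutes {1..n}}.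
            if \<tau> \<circ> \<upsilon> = \<sigma> then Ncount n \<tau> X * Ncount n \<upsilon> Y else 0)
         = Ncount n \<sigma> (prodZ X Y)"
proof -
  define P where "P = {p. p permutes {1..n}}"
  have fP: "finite P" unfolding P_def by (rule finite_permutations) simp
  define EXs where "EXs = EE n (length X)"
  define EYs where "EYs = EE n (length Y)"
  have sX: "std n X ` EXs \<subseteq> P" "std n Y ` EYs \<subseteq> P" unfolding P_def using std_permutes by auto
  define cX where "cX \<tau> = card {g\<in>EXs. std n X g = \<tau>}" for \<tau>
  define cY where "cY \<tau> = card {g\<in>EYs. std n Y g = \<tau>}" for \<tau>
  have "card {gh \<in> EXs \<times> EYs. std n X (fst gh) \<circ> std n Y (snd gh) = \<sigma>}
      = (\<Sum>gh\<in>EXs \<times> EYs. if std n X (fst gh) \<circ> std n Y (snd gh) = \<sigma> then 1 else 0)"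
    by (simp add: sum.If_cases EXs_def EYs_def finite_cartesian_product Int_def)
  also have "\<dots> = (\<Sum>g\<in>EXs. \<Sum>h\<in>EYs. if std n X g \<circ> std n Y h = \<sigma> then 1 else 0)"
    by (subst sum.cartesian_product) (simp add: split_def)
  also have "\<dots> = (\<Sum>g\<in>EXs. \<Sum>\<upsilon>\<in>P. cY \<upsilon> * (if std n X g \<circ> \<upsilon> = \<sigma> then 1 else 0))"
    unfolding cY_def
    by (intro sum.cong refl sum_group_card[of EYs P "std n Y" "\<lambda>\<upsilon>. if std n X _ \<circ> \<upsilon> = \<sigma> then 1 else 0"])
       (use fP sX in \<open>auto simp: EYs_def\<close>)
  also have "\<dots> = (\<Sum>\<tau>\<in>P. cX \<tau> * (\<Sum>\<upsilon>\<in>P. cY \<upsilon> * (if \<tau> \<circ> \<upsilon> = \<sigma> then 1 else 0)))"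
    unfolding cX_def
    using sum_group_card[of EXs P "std n X" "\<lambda>\<tau>. \<Sum>\<upsilon>\<in>P. cY \<upsilon> * (if \<tau> \<circ> \<upsilon> = \<sigma> then 1 else 0)"] fP sX
    by (simp add: EXs_def)
  also have "\<dots> = (\<Sum>\<tau>\<in>P. \<Sum>\<upsilon>\<in>P. if \<tau> \<circ> \<upsilon> = \<sigma> then Ncount n \<tau> X * Ncount n \<upsilon> Y else 0)"
    unfolding sum_distrib_left
    by (intro sum.cong refl) (auto simp: P_def cX_def cY_def EXs_def EYs_def Ncount_std)
  finally have "(\<Sum>\<tau>\<in>P. \<Sum>\<upsilon>\<in>P. if \<tau> \<circ> \<upsilon> = \<sigma> then Ncount n \<tau> X * Ncount n \<upsilon> Y else 0)
     = card {gh \<in> EXs \<times> EYs. std n X (fst gh) \<circ> std n Y (snd gh) = \<sigma>}" by simp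
  also have "\<dots> = card {G \<in> EE n (length (prodZ X Y)). std n (prodZ X Y) G = \<sigma>}"
    unfolding EXs_def EYs_def by (rule prod_bij[OF LX])
  also have "\<dots> = Ncount n \<sigma> (prodZ X Y)" using Ncount_std[OF s] by simp
  finally show ?thesis unfolding P_def .
qed


definition cnd1 :: "bool list \<Rightarrow> nat \<Rightarrow> nat \<Rightarrow> nat \<Rightarrow> nat \<Rightarrow> bool" where
  "cnd1 Z x y u v \<longleftrightarrow> u \<le> v \<and> (x < y \<longrightarrow> u < v \<or> (u = v \<and> Z ! u)) \<and> (x > y \<longrightarrow> u < v \<or> (u = v \<and> \<not> Z ! u))"

lemma Cnd_cnd1: "Cnd n \<pi> Z a \<longleftrightarrow> (\<forall>s\<in>{1..<n}. cnd1 Z (\<pi> s) (\<pi> (Suc s)) (a s) (a (Suc s)))"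
  unfolding Cnd_def cnd1_def by blast

lemma cnd1_left: "u < length Z1 \<Longrightarrow> v < length Z1 \<Longrightarrow> cnd1 (Z1 @ Z2) x y u v \<longleftrightarrow> cnd1 Z1 x y u v"
  unfolding cnd1_def by (auto simp: nth_append)

lemma cnd1_right: "length Z1 \<le> u \<Longrightarrow> length Z1 \<le> v \<Longrightarrow>
   cnd1 (Z1 @ Z2) x y u v \<longleftrightarrow> cnd1 Z2 x y (u - length Z1) (v - length Z1)"
  unfolding cnd1_def by (auto simp: nth_append)

lemma cnd1_lt: "u < v \<Longrightarrow> cnd1 Z x y u v"
  unfolding cnd1_def by auto

lemma Ncount_split:
  "Ncount n \<pi> (Z1 @ Z2) = (\<Sum>j\<le>n. Ncount j \<pi> Z1 * Ncount (n - j) (\<lambda>s. \<pi> (s + j)) Z2)"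
proof -
  define L1 where "L1 = length Z1"
  define L2 where "L2 = length Z2"
  define S where "S = {a \<in> EE n (L1 + L2). Cnd n \<pi> (Z1 @ Z2) a}"
  define Sj where "Sj j = {a \<in> S. \<forall>s\<in>{1..n}. a s < L1 \<longleftrightarrow> s \<le> j}" for j
  define A where "A j = {a \<in> EE j L1. Cnd j \<pi> Z1 a}" for j
  define B where "B j = {b \<in> EE (n - j) L2. Cnd (n - j) (\<lambda>s. \<pi> (s + j)) Z2 b}" for j
  have fS: "finite S" unfolding S_def by simp
  have S_un: "S = (\<Union>j\<in>{..n}. Sj j)"
  proof
    show "(\<Union>j\<in>{..n}. Sj j) \<subseteq> S" unfolding Sj_def by auto
    show "S \<subseteq> (\<Union>j\<in>{..n}. Sj j)"
    proof
      fix a assume aS: "a \<in> S"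
      then have mono: "\<forall>s\<in>{1..<n}. a s \<le> a (Suc s)" unfolding S_def Cnd_def by blast
      define D where "D = {s\<in>{1..n}. a s < L1}"
      define j where "j = (if D = {} then 0 else Max D)"
      have fD: "finite D" unfolding D_def by simp
      have jn: "j \<le> n" unfolding j_def using Max_in[OF fD] D_def by auto
      have "\<forall>s\<in>{1..n}. a s < L1 \<longleftrightarrow> s \<le> j"
      proof
        fix s assume s: "s \<in> {1..n}"
        show "a s < L1 \<longleftrightarrow> s \<le> j"
        proof
          assume "a s < L1"
          then have "s \<in> D" unfolding D_def using s by simp
          then show "s \<le> j" unfolding j_def using Max_ge[OF fD] by auto
        next
          assume sj: "s \<le> j"
          then have "D \<noteq> {}" unfolding j_def using s by (auto split: if_splits)
          then have jD: "j \<in> D" unfolding j_def using Max_in[OF fD] by simp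
          then have "a s \<le> a j" using mono_adj[OF mono, of s j] s sj unfolding D_def by auto
          then show "a s < L1" using jD unfolding D_def by simp
        qed
      qed
      then show "a \<in> (\<Union>j\<in>{..n}. Sj j)" unfolding Sj_def using aS jn by auto
    qed
  qed
  have disj: "Sj i \<inter> Sj j = {}" if "i \<noteq> j" "i \<le> n" "j \<le> n" for i j
  proof (rule ccontr)
    assume "Sj i \<inter> Sj j \<noteq> {}"
    then obtain a where a: "a \<in> Sj i" "a \<in> Sj j" by blast
    define m where "m = max i j"
    have "m \<in> {1..n}" unfolding m_def using that by (auto simp: max_def)
    then have "(a m < L1 \<longleftrightarrow> m \<le> i)" "(a m < L1 \<longleftrightarrow> m \<le> j)" using a unfolding Sj_def by auto
    then show False using that unfolding m_def by (auto simp: max_def split: if_splits)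
  qed
  have card_S: "card S = (\<Sum>j\<le>n. card (Sj j))"
    unfolding S_un
    by (rule card_UN_disjoint) (use fS S_un disj in \<open>auto intro: finite_subset\<close>)
  have card_Sj: "card (Sj j) = card (A j) * card (B j)" if jn: "j \<le> n" for j
  proof -
    define f where "f a = (\<lambda>s. if s \<in> {1..j} then a s else undefined,
                           \<lambda>s. if s \<in> {1..n-j} then a (s + j) - L1 else undefined)" for a :: "nat \<Rightarrow> nat"
    define f' where "f' ab = (\<lambda>s. if s \<in> {1..j} then fst ab s else if s \<in> {j+1..n} then snd ab (s - j) + L1 else undefined)"
      for ab :: "(nat \<Rightarrow> nat) \<times> (nat \<Rightarrow> nat)"
    have "bij_betw f (Sj j) (A j \<times> B j)"
    proof (rule bij_betw_byWitness[where f'=f'])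
      show "\<forall>a\<in>Sj j. f' (f a) = a"
      proof
        fix a assume a: "a \<in> Sj j"
        then have aE: "a \<in> EE n (L1 + L2)" and lo: "\<forall>s\<in>{1..n}. a s < L1 \<longleftrightarrow> s \<le> j"
          unfolding Sj_def S_def by auto
        show "f' (f a) = a"
        proof
          fix s show "f' (f a) s = a s"
          proof (cases "s \<in> {j+1..n}")
            case True
            then have "\<not> a s < L1" using lo by auto
            then show ?thesis using True by (auto simp: f_def f'_def)
          next
            case False
            then show ?thesis using EE_out[OF aE, of s] jn by (auto simp: f_def f'_def)
          qed
        qed
      qed
      show "\<forall>ab\<in>A j \<times> B j. f (f' ab) = ab"
      proof
        fix ab assume ab: "ab \<in> A j \<times> B j"
        then have e1: "fst ab \<in> EE j L1" and e2: "snd ab \<in> EE (n - j) L2" unfolding A_def B_def by auto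
        have "fst (f (f' ab)) = fst ab"
        proof
          fix s show "fst (f (f' ab)) s = fst ab s" using EE_out[OF e1, of s] by (auto simp: f_def f'_def)
        qed
        moreover have "snd (f (f' ab)) = snd ab"
        proof
          fix s show "snd (f (f' ab)) s = snd ab s" using EE_out[OF e2, of s] by (auto simp: f_def f'_def)
        qed
        ultimately show "f (f' ab) = ab" by (simp add: prod_eq_iff)
      qed
      show "f ` Sj j \<subseteq> A j \<times> B j"
      proof (rule image_subsetI)
        fix a assume a: "a \<in> Sj j"
        then have aE: "a \<in> EE n (L1 + L2)" and lo: "\<forall>s\<in>{1..n}. a s < L1 \<longleftrightarrow> s \<le> j"
          and c: "\<forall>s\<in>{1..<n}. cnd1 (Z1 @ Z2) (\<pi> s) (\<pi> (Suc s)) (a s) (a (Suc s))"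
          unfolding Sj_def S_def Cnd_cnd1 by auto
        have "fst (f a) \<in> A j"
          unfolding A_def
        proof (intro CollectI conjI)
          show "fst (f a) \<in> EE j L1" by (rule EE_I) (use lo jn in \<open>auto simp: f_def\<close>)
          show "Cnd j \<pi> Z1 (fst (f a))" unfolding Cnd_cnd1
          proof
            fix s assume s: "s \<in> {1..<j}"
            have "a s < L1" "a (Suc s) < L1" using lo s jn by auto
            moreover have "cnd1 (Z1 @ Z2) (\<pi> s) (\<pi> (Suc s)) (a s) (a (Suc s))" using c s jn by auto
            ultimately have "cnd1 Z1 (\<pi> s) (\<pi> (Suc s)) (a s) (a (Suc s))"
              using cnd1_left[of "a s" Z1 "a (Suc s)" Z2] by (simp add: L1_def)
            then show "cnd1 Z1 (\<pi> s) (\<pi> (Suc s)) (fst (f a) s) (fst (f a) (Suc s))"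
              using s by (auto simp: f_def)
          qed
        qed
        moreover have "snd (f a) \<in> B j"
          unfolding B_def
        proof (intro CollectI conjI)
          show "snd (f a) \<in> EE (n - j) L2"
          proof (rule EE_I)
            fix s assume s: "s \<in> {1..n - j}"
            then have "a (s + j) < L1 + L2" "\<not> a (s + j) < L1" using EE_val[OF aE, of "s+j"] lo by auto
            then show "snd (f a) s < L2" using s by (auto simp: f_def)
          qed (auto simp: f_def)
          show "Cnd (n - j) (\<lambda>s. \<pi> (s + j)) Z2 (snd (f a))" unfolding Cnd_cnd1
          proof
            fix s assume s: "s \<in> {1..<n - j}"
            have ge: "\<not> a (s + j) < L1" "\<not> a (Suc s + j) < L1" using lo s by auto
            have "cnd1 (Z1 @ Z2) (\<pi> (s + j)) (\<pi> (Suc (s + j))) (a (s + j)) (a (Suc (s + j)))"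
              using c s by auto
            then show "cnd1 Z2 (\<pi> (s + j)) (\<pi> (Suc s + j)) (snd (f a) s) (snd (f a) (Suc s))"
              using s ge cnd1_right[of Z1 "a (s+j)" "a (Suc s + j)" Z2] by (auto simp: f_def L1_def)
          qed
        qed
        ultimately show "f a \<in> A j \<times> B j" by (simp add: mem_Times_iff)
      qed
      show "f' ` (A j \<times> B j) \<subseteq> Sj j"
      proof (rule image_subsetI)
        fix ab assume ab: "ab \<in> A j \<times> B j"
        then have e1: "fst ab \<in> EE j L1" and e2: "snd ab \<in> EE (n - j) L2"
          and c1: "\<forall>s\<in>{1..<j}. cnd1 Z1 (\<pi> s) (\<pi> (Suc s)) (fst ab s) (fst ab (Suc s))"
          and c2: "\<forall>s\<in>{1..<n-j}. cnd1 Z2 (\<pi> (s + j)) (\<pi> (Suc s + j)) (snd ab s) (snd ab (Suc s))"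
          unfolding A_def B_def Cnd_cnd1 by auto
        have inE: "f' ab \<in> EE n (L1 + L2)"
        proof (rule EE_I)
          fix s assume s: "s \<in> {1..n}"
          show "f' ab s < L1 + L2"
          proof (cases "s \<le> j")
            case True then show ?thesis using EE_val[OF e1, of s] s by (auto simp: f'_def)
          next
            case False then have "s - j \<in> {1..n-j}" using s by auto
            then show ?thesis using EE_val[OF e2, of "s - j"] s False by (auto simp: f'_def)
          qed
        qed (use jn in \<open>auto simp: f'_def\<close>)
        have lo: "\<forall>s\<in>{1..n}. f' ab s < L1 \<longleftrightarrow> s \<le> j"
          using EE_val[OF e1] by (auto simp: f'_def)
        have "Cnd n \<pi> (Z1 @ Z2) (f' ab)" unfolding Cnd_cnd1
        proof
          fix s assume s: "s \<in> {1..<n}"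
          consider "Suc s \<le> j" | "s = j" | "j < s" by linarith
          then show "cnd1 (Z1 @ Z2) (\<pi> s) (\<pi> (Suc s)) (f' ab s) (f' ab (Suc s))"
          proof cases
            case 1
            have "fst ab s < L1" "fst ab (Suc s) < L1" using EE_val[OF e1] s 1 by auto
            then show ?thesis using c1 s 1 cnd1_left[of "fst ab s" Z1 "fst ab (Suc s)" Z2]
              by (auto simp: f'_def L1_def)
          next
            case 2
            have "f' ab s < L1" "\<not> f' ab (Suc s) < L1" using lo s 2 by auto
            then show ?thesis by (intro cnd1_lt) simp
          next
            case 3
            have ss: "s - j \<in> {1..<n-j}" using s 3 by auto
            have eqs: "Suc (s - j) + j = Suc s" "s - j + j = s" "Suc s - j = Suc (s - j)" using 3 by auto
            have "cnd1 Z2 (\<pi> s) (\<pi> (Suc s)) (snd ab (s - j)) (snd ab (Suc (s - j)))"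
              using c2 ss eqs by metis
            moreover have "f' ab s = snd ab (s - j) + L1" "f' ab (Suc s) = snd ab (Suc (s - j)) + L1"
              using s 3 eqs by (auto simp: f'_def)
            ultimately show ?thesis using cnd1_right[of Z1 "f' ab s" "f' ab (Suc s)" Z2]
              by (simp add: L1_def)
          qed
        qed
        then show "f' ab \<in> Sj j" unfolding Sj_def S_def using inE lo by auto
      qed
    qed
    then have "card (Sj j) = card (A j \<times> B j)" by (rule bij_betw_same_card)
    then show ?thesis by (simp add: card_cartesian_product)
  qed
  have "Ncount n \<pi> (Z1 @ Z2) = card S" unfolding Ncount_alt S_def L1_def L2_def by simp
  also have "\<dots> = (\<Sum>j\<le>n. card (A j) * card (B j))" using card_S card_Sj by simp
  also have "\<dots> = (\<Sum>j\<le>n. Ncount j \<pi> Z1 * Ncount (n - j) (\<lambda>s. \<pi> (s + j)) Z2)"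
    unfolding A_def B_def Ncount_alt L1_def L2_def ..
  finally show ?thesis .
qed


lemma pow_diff_expand:
  "((x::rat) + 1) ^ Suc i - x ^ Suc i = of_nat (Suc i) * x ^ i + (\<Sum>j<i. of_nat (Suc i choose j) * x ^ j)"
proof -
  have "(x + 1) ^ Suc i = (\<Sum>j\<le>Suc i. of_nat (Suc i choose j) * x ^ j)"
    using binomial_ring[of x 1 "Suc i"] by simp
  also have "\<dots> = (\<Sum>j<i. of_nat (Suc i choose j) * x ^ j) + of_nat (Suc i) * x ^ i + x ^ Suc i"
    by (simp add: lessThan_Suc_atMost[symmetric])
  finally show ?thesis by simp
qed

lemma antidiff_monom: "\<exists>p::rat poly. \<forall>x. poly p (x + 1) - poly p x = x ^ i"
proof (induction i rule: less_induct)
  case (less i)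
  then have "\<forall>j\<in>{..<i}. \<exists>p::rat poly. \<forall>x. poly p (x + 1) - poly p x = x ^ j" by auto
  from bchoice[OF this] obtain P :: "nat \<Rightarrow> rat poly" where P0: "\<forall>j\<in>{..<i}. \<forall>x. poly (P j) (x + 1) - poly (P j) x = x ^ j"
    by blast
  then have P: "\<And>j x. j < i \<Longrightarrow> poly (P j) (x + 1) - poly (P j) x = x ^ j" by auto
  define p where "p = smult (1 / of_nat (Suc i)) (monom 1 (Suc i) - (\<Sum>j<i. smult (of_nat (Suc i choose j)) (P j)))"
  have "poly p (x + 1) - poly p x = x ^ i" for x
  proof -
    have pp: "poly p y = (1 / of_nat (Suc i)) * (y ^ Suc i - (\<Sum>j<i. of_nat (Suc i choose j) * poly (P j) y))" for y
      by (simp add: p_def poly_monom poly_sum)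
    have ss: "(\<Sum>j<i. of_nat (Suc i choose j) * poly (P j) (x + 1)) - (\<Sum>j<i. of_nat (Suc i choose j) * poly (P j) x)
       = (\<Sum>j<i. of_nat (Suc i choose j) * (poly (P j) (x + 1) - poly (P j) x))"
      by (simp add: sum_subtractf[symmetric] right_diff_distrib)
    have "poly p (x + 1) - poly p x = (1 / of_nat (Suc i)) *
        (((x + 1) ^ Suc i - x ^ Suc i) - (\<Sum>j<i. of_nat (Suc i choose j) * (poly (P j) (x + 1) - poly (P j) x)))"
      unfolding pp ss[symmetric] by (simp add: algebra_simps)
    also have "\<dots> = (1 / of_nat (Suc i)) * (of_nat (Suc i) * x ^ i)"
      unfolding pow_diff_expand using P by simp
    also have "\<dots> = x ^ i" by simp
    finally show ?thesis .
  qed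
  then show ?case by blast
qed

lemma antidiff: "\<exists>p::rat poly. \<forall>x. poly p (x + 1) - poly p x = poly q x"
proof -
  have "\<forall>i. \<exists>p::rat poly. \<forall>x. poly p (x + 1) - poly p x = x ^ i" using antidiff_monom by blast
  from choice[OF this] obtain P :: "nat \<Rightarrow> rat poly" where P0: "\<forall>i. \<forall>x. poly (P i) (x + 1) - poly (P i) x = x ^ i"
    by blast
  then have P: "\<And>i x. poly (P i) (x + 1) - poly (P i) x = x ^ i" by auto
  define p where "p = (\<Sum>i\<le>degree q. smult (coeff q i) (P i))"
  have "poly p (x + 1) - poly p x = poly q x" for x
  proof -
    have "poly p (x + 1) - poly p x = (\<Sum>i\<le>degree q. coeff q i * (poly (P i) (x + 1) - poly (P i) x))"
      unfolding p_def by (simp add: poly_sum sum_subtractf[symmetric] right_diff_distrib)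
    also have "\<dots> = poly q x" unfolding P by (simp add: poly_altdef)
    finally show ?thesis .
  qed
  then show ?thesis by blast
qed

lemma poly_from_diff:
  fixes f :: "nat \<Rightarrow> rat"
  assumes "\<And>k. f (Suc k) - f k = poly q (of_nat k)"
  shows "\<exists>p. \<forall>k. poly p (of_nat k) = f k"
proof -
  obtain p0 where p0: "\<And>x. poly p0 (x + 1) - poly p0 x = poly q x" using antidiff by blast
  define p where "p = p0 + [: f 0 - poly p0 0 :]"
  have "poly p (of_nat k) = f k" for k
  proof (induction k)
    case 0 then show ?case by (simp add: p_def)
  next
    case (Suc k)
    have "poly p (of_nat (Suc k)) = poly p (of_nat k) + poly q (of_nat k)"
      using p0[of "of_nat k"] by (simp add: p_def algebra_simps)
    then show ?case using Suc assms[of k] by simp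
  qed
  then show ?thesis by blast
qed

lemma Ncount_0: "Ncount 0 \<pi> Z = 1"
  unfolding Ncount_alt EE_def Cnd_def by simp

lemma periodic_list:
  assumes per: "\<And>i. P (i + 2) = (P i :: bool)"
  shows "map P [0..<2 * Suc k + e] = map P [0..<2 * k + e] @ [P e, P (Suc e)]"
proof -
  have pe: "P (2 * k + e) = P e" "P (Suc (2 * k + e)) = P (Suc e)"
  proof (induction k)
    case 0 { case 1 show ?case by simp next case 2 show ?case by simp }
  next
    case (Suc k)
    { case 1 show ?case using Suc(1) per[of "2 * k + e"] by (simp add: algebra_simps)
    next case 2 show ?case using Suc(2) per[of "Suc (2 * k + e)"] by (simp add: algebra_simps) }
  qed
  have "[0..<2 * Suc k + e] = [0..<2 * k + e] @ [2 * k + e, Suc (2 * k + e)]"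
    by (simp add: upt_Suc)
  then show ?thesis using pe by simp
qed

lemma Ncount_poly:
  assumes per: "\<And>i. P (i + 2) = (P i :: bool)"
  shows "\<exists>p::rat poly. \<forall>k. poly p (of_nat k) = of_nat (Ncount m \<pi> (map P [0..<2 * k + e]))"
proof (induction m arbitrary: \<pi> rule: less_induct)
  case (less m)
  then have "\<forall>j\<in>{..<m}. \<exists>p::rat poly. \<forall>k. poly p (of_nat k) = of_nat (Ncount j \<pi> (map P [0..<2 * k + e]))"
    by auto
  from bchoice[OF this] obtain Q :: "nat \<Rightarrow> rat poly" where Q0: "\<forall>j\<in>{..<m}. \<forall>k. poly (Q j) (of_nat k) = of_nat (Ncount j \<pi> (map P [0..<2 * k + e]))"
    by blast
  then have Q: "\<And>j k. j < m \<Longrightarrow> poly (Q j) (of_nat k) = of_nat (Ncount j \<pi> (map P [0..<2 * k + e]))" by auto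
  define c where "c j = (of_nat (Ncount (m - j) (\<lambda>s. \<pi> (s + j)) [P e, P (Suc e)]) :: rat)" for j
  define q where "q = (\<Sum>j<m. smult (c j) (Q j))"
  define f where "f k = (of_nat (Ncount m \<pi> (map P [0..<2 * k + e])) :: rat)" for k
  have "f (Suc k) - f k = poly q (of_nat k)" for k
  proof -
    have "f (Suc k) = (\<Sum>j\<le>m. of_nat (Ncount j \<pi> (map P [0..<2 * k + e])) * c j)"
      unfolding f_def c_def periodic_list[of P, OF per] Ncount_split by simp
    also have "\<dots> = (\<Sum>j<m. of_nat (Ncount j \<pi> (map P [0..<2 * k + e])) * c j) + f k"
      by (simp add: lessThan_Suc_atMost[symmetric] f_def c_def Ncount_0)
    finally show ?thesis unfolding q_def poly_sum using Q by (simp add: mult.commute)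
  qed
  then obtain p where "\<forall>k. poly p (of_nat k) = f k" using poly_from_diff by blast
  then show ?case unfolding f_def by blast
qed


lemma Zpairs_map: "Zpairs k = map odd [0..<2 * k]"
proof (induction k)
  case 0 then show ?case by (simp add: Zpairs_def)
next
  case (Suc k)
  have cr: "concat (replicate (Suc j) xs) = concat (replicate j xs) @ xs" for j and xs :: "bool list"
    by (induction j) auto
  have "Zpairs (Suc k) = Zpairs k @ [False, True]"
    unfolding Zpairs_def by (rule cr)
  moreover have "[0..<2 * Suc k] = [0..<2 * k] @ [2 * k, Suc (2 * k)]" by (simp add: upt_Suc)
  ultimately show ?case using Suc by simp
qed

lemma Z_prime_map: "Z_prime k = map odd [0..<2 * k + 0]"
  by (simp add: Z_prime_def Zpairs_map)

lemma Z_left_map: "Z_left k = map even [0..<2 * k + 1]"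
proof -
  have "[0..<2 * k + 1] = 0 # map Suc [0..<2 * k]" by (simp add: map_Suc_upt upt_conv_Cons)
  then show ?thesis by (simp add: Z_left_def Zpairs_map)
qed

lemma Z_right_map: "Z_right k = map odd [0..<2 * k + 1]"
  by (simp add: Z_right_def Zpairs_map upt_Suc)

lemma Z_bar_map: "k \<ge> 1 \<Longrightarrow> Z_bar k = map even [0..<2 * (k - 1) + 2]"
proof -
  assume "k \<ge> 1"
  then obtain k' where k: "k = Suc k'" by (cases k) auto
  have "Z_bar k = Z_left k' @ [False]" unfolding k Z_bar_def Z_left_def by simp
  also have "\<dots> = map even [0..<2 * k' + 1] @ [even (2 * k' + 1)]" unfolding Z_left_map by simp
  also have "\<dots> = map even [0..<2 * (k - 1) + 2]" unfolding k by (simp add: upt_Suc)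
  finally show ?thesis .
qed

lemma Z_bar_map2: "k \<ge> 1 \<Longrightarrow> Z_bar k = map even [0..<2 * k]"
proof -
  assume k: "k \<ge> 1"
  have "2 * (k - 1) + 2 = 2 * k" using k by simp
  then show ?thesis using Z_bar_map[OF k] by simp
qed

lemma poly_unique_pos:
  fixes p q :: "rat poly"
  assumes "\<forall>k\<ge>1. poly p (of_nat k) = poly q (of_nat k)"
  shows "p = q"
proof (rule ccontr)
  assume "p \<noteq> q"
  then have "p - q \<noteq> 0" by simp
  then have fin: "finite {x. poly (p - q) x = 0}" by (rule poly_roots_finite)
  have "of_nat ` {1::nat..} \<subseteq> {x. poly (p - q) x = 0}" using assms by auto
  then have "finite (of_nat ` {1::nat..} :: rat set)" using fin finite_subset by blast
  then have "finite {1::nat..}" using finite_imageD inj_of_nat by (metis inj_on_subset subset_UNIV)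
  then show False using infinite_Ici by blast
qed

lemma omega_char:
  assumes "\<exists>p::rat poly. \<forall>k\<ge>1. poly p (of_nat k) = of_nat (Ncount n \<pi> (Zf k))"
  shows "k \<ge> 1 \<Longrightarrow> poly (omega_poly n Zf \<pi>) (of_nat k) = of_nat (Ncount n \<pi> (Zf k))"
proof -
  assume k: "k \<ge> 1"
  obtain p where p: "\<forall>k\<ge>1. poly p (of_nat k) = (of_nat (Ncount n \<pi> (Zf k)) :: rat)" using assms by blast
  have "\<exists>!p. \<forall>k\<ge>1. poly p (of_nat k) = (of_nat (Ncount n \<pi> (Zf k)) :: rat)"
  proof (rule ex1I[of _ p])
    show "\<forall>k\<ge>1. poly p (of_nat k) = (of_nat (Ncount n \<pi> (Zf k)) :: rat)" by (rule p)
    fix q :: "rat poly" assume "\<forall>k\<ge>1. poly q (of_nat k) = (of_nat (Ncount n \<pi> (Zf k)) :: rat)"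
    then show "q = p" using p by (intro poly_unique_pos) simp
  qed
  then have "\<forall>k\<ge>1. poly (omega_poly n Zf \<pi>) (of_nat k) = (of_nat (Ncount n \<pi> (Zf k)) :: rat)"
    unfolding omega_poly_def by (rule theI')
  then show ?thesis using k by simp
qed

lemma per_odd: "odd (i + 2) = odd (i::nat)" by simp
lemma per_even: "even (i + 2) = even (i::nat)" by simp

lemma omega_prime: "k \<ge> 1 \<Longrightarrow> poly (omega_poly n Z_prime \<pi>) (of_nat k) = of_nat (Ncount n \<pi> (Z_prime k))"
proof (rule omega_char)
  obtain p :: "rat poly" where p: "\<forall>k. poly p (of_nat k) = of_nat (Ncount n \<pi> (map odd [0..<2 * k + 0]))"
    using Ncount_poly[of odd n \<pi> 0, OF per_odd] by blast
  then have "\<forall>k\<ge>1. poly p (of_nat k) = of_nat (Ncount n \<pi> (Z_prime k))" by (simp add: Z_prime_map)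
  then show "\<exists>p::rat poly. \<forall>k\<ge>1. poly p (of_nat k) = of_nat (Ncount n \<pi> (Z_prime k))" by blast
qed

lemma omega_left: "k \<ge> 1 \<Longrightarrow> poly (omega_poly n Z_left \<pi>) (of_nat k) = of_nat (Ncount n \<pi> (Z_left k))"
proof (rule omega_char)
  obtain p :: "rat poly" where p: "\<forall>k. poly p (of_nat k) = of_nat (Ncount n \<pi> (map even [0..<2 * k + 1]))"
    using Ncount_poly[of even n \<pi> 1, OF per_even] by blast
  then have "\<forall>k\<ge>1. poly p (of_nat k) = of_nat (Ncount n \<pi> (Z_left k))" by (simp add: Z_left_map)
  then show "\<exists>p::rat poly. \<forall>k\<ge>1. poly p (of_nat k) = of_nat (Ncount n \<pi> (Z_left k))" by blast
qed

lemma omega_right: "k \<ge> 1 \<Longrightarrow> poly (omega_poly n Z_right \<pi>) (of_nat k) = of_nat (Ncount n \<pi> (Z_right k))"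
proof (rule omega_char)
  obtain p :: "rat poly" where p: "\<forall>k. poly p (of_nat k) = of_nat (Ncount n \<pi> (map odd [0..<2 * k + 1]))"
    using Ncount_poly[of odd n \<pi> 1, OF per_odd] by blast
  then have "\<forall>k\<ge>1. poly p (of_nat k) = of_nat (Ncount n \<pi> (Z_right k))" by (simp add: Z_right_map)
  then show "\<exists>p::rat poly. \<forall>k\<ge>1. poly p (of_nat k) = of_nat (Ncount n \<pi> (Z_right k))" by blast
qed

lemma omega_bar: "k \<ge> 1 \<Longrightarrow> poly (omega_poly n Z_bar \<pi>) (of_nat k) = of_nat (Ncount n \<pi> (Z_bar k))"
proof (rule omega_char)
  obtain p :: "rat poly" where p: "\<forall>k. poly p (of_nat k) = (of_nat (Ncount n \<pi> (map even [0..<2 * k + 2])) :: rat)"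
    using Ncount_poly[of even n \<pi> 2, OF per_even] by blast
  have "\<forall>k\<ge>1. poly (p \<circ>\<^sub>p [:-1, 1:]) (of_nat k) = (of_nat (Ncount n \<pi> (Z_bar k)) :: rat)"
  proof (intro allI impI)
    fix k :: nat assume k: "k \<ge> 1"
    have e1: "of_nat (k - 1) = (of_nat k - 1 :: rat)" using of_nat_diff[OF k] by simp
    have e2: "poly [:-1, 1:] (x :: rat) = x - 1" for x by simp
    have "poly (p \<circ>\<^sub>p [:-1, 1:]) (of_nat k) = poly p (of_nat (k - 1))" unfolding poly_pcompose e2 e1 ..
    also have "\<dots> = (of_nat (Ncount n \<pi> (map even [0..<2 * (k - 1) + 2])) :: rat)" using p by blast
    finally show "poly (p \<circ>\<^sub>p [:-1, 1:]) (of_nat k) = (of_nat (Ncount n \<pi> (Z_bar k)) :: rat)"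
      using Z_bar_map[OF k] by simp
  qed
  then show "\<exists>p::rat poly. \<forall>k\<ge>1. poly p (of_nat k) = (of_nat (Ncount n \<pi> (Z_bar k)) :: rat)" by blast
qed


lemma prodZ_maps:
  assumes LX: "0 < LX"
    and H: "\<And>j q. j < LY \<Longrightarrow> q < LX \<Longrightarrow> (PX (if PY j then q else LX - 1 - q) = PY j) = T (j * LX + q)"
  shows "prodZ (map PX [0..<LX]) (map PY [0..<LY]) = map T [0..<LX * LY]"
proof -
  have pw: "(map PX [0..<LX] ! dec2 (map PX [0..<LX]) (map PY [0..<LY]) c =
          map PY [0..<LY] ! (c div LX)) = T c" if c: "c < LX * LY" for c
  proof -
  define j where "j = c div LX"
  define q where "q = c mod LX"
  have j: "j < LY" unfolding j_def using c LX by (simp add: div_less_iff_less_mult mult.commute)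
  have q: "q < LX" unfolding q_def using LX by simp
  have cj: "c = j * LX + q" unfolding j_def q_def by simp
  have dq: "dec2 (map PX [0..<LX]) (map PY [0..<LY]) c = (if PY j then q else LX - 1 - q)"
    unfolding dec2_def using j by (simp add: j_def q_def)
  have dlt: "(if PY j then q else LX - 1 - q) < LX" using q by auto
  have cd: "c div length (map PX [0..<LX]) = j" by (simp add: j_def)
  have "(map PX [0..<LX] ! dec2 (map PX [0..<LX]) (map PY [0..<LY]) c =
          map PY [0..<LY] ! (c div LX)) = (PX (if PY j then q else LX - 1 - q) = PY j)"
    unfolding dq j_def[symmetric] using dlt j by simp
  then show ?thesis using H[OF j q] cj by simp
  qed
  show ?thesis unfolding prodZ_def length_map length_upt diff_zero
    by (rule map_cong[OF refl], rule pw, simp)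
qed

lemma prodZ_maps2:
  assumes LX: "0 < LX" and N: "N = LX * LY"
    and H: "\<And>j q. j < LY \<Longrightarrow> q < LX \<Longrightarrow> (PX (if PY j then q else LX - 1 - q) = PY j) = T (j * LX + q)"
  shows "prodZ (map PX [0..<LX]) (map PY [0..<LY]) = map T [0..<N]"
  unfolding N by (rule prodZ_maps[of LX LY PX PY T, OF LX H])

lemma odd_rev: "q < 2 * k \<Longrightarrow> odd (2 * k - 1 - q) \<longleftrightarrow> even (q::nat)"
  by presburger

lemma even_rev: "q < 2 * m + 1 \<Longrightarrow> even (2 * m + 1 - 1 - q) \<longleftrightarrow> even (q::nat)"
  by presburger

lemma rev_par: "q < L \<Longrightarrow> even (L - 1 - q) \<longleftrightarrow> (even q \<longleftrightarrow> odd (L::nat))"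
  by presburger

lemma lin_par: "even (j * L + q) \<longleftrightarrow> ((even j \<or> even L) \<longleftrightarrow> even (q::nat))"
  by (simp add: even_add even_mult_iff)

lemma id1: "k \<ge> 1 \<Longrightarrow> prodZ (Z_prime k) (Z_left m) = Z_prime (k * (2 * m + 1))"
  unfolding Z_prime_map Z_left_map
proof (rule prodZ_maps2)
  fix j q assume j: "j < 2 * m + 1" and q: "q < 2 * k + 0"
  show "(odd (if even j then q else 2 * k + 0 - 1 - q) = even j) = odd (j * (2 * k + 0) + q)"
    using odd_rev[of q k] q by (cases "even j") auto
qed auto


lemma id2: assumes k: "k \<ge> 1" shows "prodZ (Z_left m) (Z_prime k) = Z_prime (k * (2 * m + 1))"
proof -
  have kb: "k \<ge> 1" "k * (2 * m + 1) \<ge> 1" using k by auto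
  have "prodZ (map even [0..<2 * m + 1]) (map odd [0..<2 * k + 0]) = map odd [0..<2 * (k * (2 * m + 1)) + 0]"
  proof (rule prodZ_maps2)
    fix j q assume j: "j < 2 * k + 0" and q: "q < 2 * m + 1"
    show "(even (if odd j then q else 2 * m + 1 - 1 - q) = odd j) = odd (j * (2 * m + 1) + q)"
      using q rev_par[OF q] by (cases "even j") (simp_all add: lin_par)
  qed (use k in \<open>auto simp: algebra_simps\<close>)
  then show ?thesis using kb by (simp add: Z_prime_map Z_left_map Z_right_map Z_bar_map2)
qed

lemma id3: assumes k: "k \<ge> 1" shows "prodZ (Z_bar k) (Z_left m) = Z_bar (k * (2 * m + 1))"
proof -
  have kb: "k \<ge> 1" "k * (2 * m + 1) \<ge> 1" using k by auto
  have "prodZ (map even [0..<2 * k]) (map even [0..<2 * m + 1]) = map even [0..<2 * (k * (2 * m + 1))]"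
  proof (rule prodZ_maps2)
    fix j q assume j: "j < 2 * m + 1" and q: "q < 2 * k"
    show "(even (if even j then q else 2 * k - 1 - q) = even j) = even (j * (2 * k) + q)"
      using q rev_par[OF q] by (cases "even j") (simp_all add: lin_par)
  qed (use k in \<open>auto simp: algebra_simps\<close>)
  then show ?thesis using kb by (simp add: Z_prime_map Z_left_map Z_right_map Z_bar_map2)
qed

lemma id4: assumes k: "k \<ge> 1" shows "prodZ (Z_left m) (Z_bar k) = Z_bar (k * (2 * m + 1))"
proof -
  have kb: "k \<ge> 1" "k * (2 * m + 1) \<ge> 1" using k by auto
  have "prodZ (map even [0..<2 * m + 1]) (map even [0..<2 * k]) = map even [0..<2 * (k * (2 * m + 1))]"
  proof (rule prodZ_maps2)
    fix j q assume j: "j < 2 * k" and q: "q < 2 * m + 1"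
    show "(even (if even j then q else 2 * m + 1 - 1 - q) = even j) = even (j * (2 * m + 1) + q)"
      using q rev_par[OF q] by (cases "even j") (simp_all add: lin_par)
  qed (use k in \<open>auto simp: algebra_simps\<close>)
  then show ?thesis using kb by (simp add: Z_prime_map Z_left_map Z_right_map Z_bar_map2)
qed

lemma id5: assumes k: "k \<ge> 1" shows "prodZ (Z_prime k) (Z_right m) = Z_prime (k * (2 * m + 1))"
proof -
  have kb: "k \<ge> 1" "k * (2 * m + 1) \<ge> 1" using k by auto
  have "prodZ (map odd [0..<2 * k + 0]) (map odd [0..<2 * m + 1]) = map odd [0..<2 * (k * (2 * m + 1)) + 0]"
  proof (rule prodZ_maps2)
    fix j q assume j: "j < 2 * m + 1" and q: "q < 2 * k + 0"
    show "(odd (if odd j then q else 2 * k + 0 - 1 - q) = odd j) = odd (j * (2 * k + 0) + q)"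
      using q rev_par[OF q] by (cases "even j") (simp_all add: lin_par)
  qed (use k in \<open>auto simp: algebra_simps\<close>)
  then show ?thesis using kb by (simp add: Z_prime_map Z_left_map Z_right_map Z_bar_map2)
qed

lemma id6: assumes k: "k \<ge> 1" shows "prodZ (Z_right m) (Z_bar k) = Z_prime (k * (2 * m + 1))"
proof -
  have kb: "k \<ge> 1" "k * (2 * m + 1) \<ge> 1" using k by auto
  have "prodZ (map odd [0..<2 * m + 1]) (map even [0..<2 * k]) = map odd [0..<2 * (k * (2 * m + 1)) + 0]"
  proof (rule prodZ_maps2)
    fix j q assume j: "j < 2 * k" and q: "q < 2 * m + 1"
    show "(odd (if even j then q else 2 * m + 1 - 1 - q) = even j) = odd (j * (2 * m + 1) + q)"
      using q rev_par[OF q] by (cases "even j") (simp_all add: lin_par)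
  qed (use k in \<open>auto simp: algebra_simps\<close>)
  then show ?thesis using kb by (simp add: Z_prime_map Z_left_map Z_right_map Z_bar_map2)
qed

lemma id7: assumes k: "k \<ge> 1" shows "prodZ (Z_bar k) (Z_right m) = Z_bar (k * (2 * m + 1))"
proof -
  have kb: "k \<ge> 1" "k * (2 * m + 1) \<ge> 1" using k by auto
  have "prodZ (map even [0..<2 * k]) (map odd [0..<2 * m + 1]) = map even [0..<2 * (k * (2 * m + 1))]"
  proof (rule prodZ_maps2)
    fix j q assume j: "j < 2 * m + 1" and q: "q < 2 * k"
    show "(even (if odd j then q else 2 * k - 1 - q) = odd j) = even (j * (2 * k) + q)"
      using q rev_par[OF q] by (cases "even j") (simp_all add: lin_par)
  qed (use k in \<open>auto simp: algebra_simps\<close>)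
  then show ?thesis using kb by (simp add: Z_prime_map Z_left_map Z_right_map Z_bar_map2)
qed

lemma id8: assumes k: "k \<ge> 1" shows "prodZ (Z_right m) (Z_prime k) = Z_bar (k * (2 * m + 1))"
proof -
  have kb: "k \<ge> 1" "k * (2 * m + 1) \<ge> 1" using k by auto
  have "prodZ (map odd [0..<2 * m + 1]) (map odd [0..<2 * k + 0]) = map even [0..<2 * (k * (2 * m + 1))]"
  proof (rule prodZ_maps2)
    fix j q assume j: "j < 2 * k + 0" and q: "q < 2 * m + 1"
    show "(odd (if odd j then q else 2 * m + 1 - 1 - q) = odd j) = even (j * (2 * m + 1) + q)"
      using q rev_par[OF q] by (cases "even j") (simp_all add: lin_par)
  qed (use k in \<open>auto simp: algebra_simps\<close>)
  then show ?thesis using kb by (simp add: Z_prime_map Z_left_map Z_right_map Z_bar_map2)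
qed


definition ev :: "rat \<Rightarrow> rat \<Rightarrow> rat poly poly \<Rightarrow> rat" where
  "ev x y P = poly (poly P [:y:]) x"

lemma ev_add[simp]: "ev x y (a + b) = ev x y a + ev x y b" by (simp add: ev_def)
lemma ev_diff[simp]: "ev x y (a - b) = ev x y a - ev x y b" by (simp add: ev_def)
lemma ev_mult[simp]: "ev x y (a * b) = ev x y a * ev x y b" by (simp add: ev_def)
lemma ev_0[simp]: "ev x y 0 = 0" by (simp add: ev_def)
lemma ev_1[simp]: "ev x y 1 = 1" by (simp add: ev_def)
lemma ev_cst[simp]: "ev x y (cst c) = c" by (simp add: ev_def cst_def)
lemma ev_Xv[simp]: "ev x y Xv = x" by (simp add: ev_def Xv_def)
lemma ev_Yv[simp]: "ev x y Yv = y" by (simp add: ev_def Yv_def)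
lemma ev_sum[simp]: "ev x y (sum f S) = (\<Sum>i\<in>S. ev x y (f i))"
  by (induction S rule: infinite_finite_induct) (auto simp: ev_def)
lemma ev_if: "ev x y (if b then u else v) = (if b then ev x y u else ev x y v)" by simp

lemma ev_subst[simp]: "ev x y (subst p t) = poly p (ev x y t)"
proof (induction p rule: pCons_induct)
  case 0 then show ?case by (simp add: subst_def)
next
  case (pCons a p)
  have c0: "cst 0 = 0" by (simp add: cst_def)
  have "subst (pCons a p) t = cst a + t * subst p t"
    unfolding subst_def by (simp add: map_poly_pCons[of cst, OF c0])
  then show ?case using pCons.IH by simp
qed

lemma poly_inf_zero:
  fixes p :: "rat poly"
  assumes "infinite S" "\<forall>x\<in>S. poly p x = 0"
  shows "p = 0"
proof (rule ccontr)
  assume "p \<noteq> 0"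
  then have "finite {x. poly p x = 0}" by (rule poly_roots_finite)
  moreover have "S \<subseteq> {x. poly p x = 0}" using assms(2) by auto
  ultimately show False using assms(1) finite_subset by blast
qed

lemma inf_image_nat:
  fixes f :: "nat \<Rightarrow> rat"
  assumes "inj f"
  shows "infinite (f ` {1..})"
proof
  assume "finite (f ` {1..})"
  then have "finite {1::nat..}" using finite_imageD assms by (metis inj_on_subset subset_UNIV)
  then show False using infinite_Ici by blast
qed

lemma coeff_poly_const: "coeff (poly P [:c:]) j = poly (map_poly (\<lambda>q. coeff q j) P) c"
proof (induction P rule: pCons_induct)
  case 0 then show ?case by simp
next
  case (pCons a P)
  have "map_poly (\<lambda>q. coeff q j) (pCons a P) = pCons (coeff a j) (map_poly (\<lambda>q. coeff q j) P)"
    by (rule map_poly_pCons) simp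
  then show ?case using pCons.IH by simp
qed

lemma bivar_zero:
  assumes H: "\<And>k m. k \<ge> 1 \<Longrightarrow> m \<ge> 1 \<Longrightarrow> ev (of_nat (2 * k)) (of_nat (2 * m + 1)) P = 0"
  shows "P = 0"
proof -
  have inj1: "inj (\<lambda>k::nat. (of_nat (2 * k) :: rat))" by (rule injI) simp
  have inj2: "inj (\<lambda>m::nat. (of_nat (2 * m + 1) :: rat))" by (rule injI) simp
  have Q0: "poly P [:of_nat (2 * m + 1):] = 0" if m: "m \<ge> 1" for m
  proof (rule poly_inf_zero[OF inf_image_nat[OF inj1]])
    show "\<forall>x\<in>(\<lambda>k. of_nat (2 * k)) ` {1..}. poly (poly P [:of_nat (2 * m + 1):]) x = 0"
      using H m unfolding ev_def by auto
  qed
  have R0: "map_poly (\<lambda>q. coeff q j) P = 0" for j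
  proof (rule poly_inf_zero[OF inf_image_nat[OF inj2]])
    show "\<forall>x\<in>(\<lambda>m. of_nat (2 * m + 1)) ` {1..}. poly (map_poly (\<lambda>q. coeff q j) P) x = 0"
    proof
      fix x assume "x \<in> (\<lambda>m. of_nat (2 * m + 1) :: rat) ` {1..}"
      then obtain m where m: "m \<ge> 1" and x: "x = of_nat (2 * m + 1)" by auto
      have "poly (map_poly (\<lambda>q. coeff q j) P) x = coeff (poly P [:x:]) j"
        by (rule coeff_poly_const[symmetric])
      also have "\<dots> = 0" using Q0[OF m] x by simp
      finally show "poly (map_poly (\<lambda>q. coeff q j) P) x = 0" .
    qed
  qed
  show ?thesis
  proof (rule poly_eqI)
    fix i
    show "coeff P i = coeff 0 i"
    proof (rule poly_eqI)
      fix j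
      have "coeff (map_poly (\<lambda>q. coeff q j) P) i = 0" using R0 by simp
      then show "coeff (coeff P i) j = coeff (coeff 0 i) j" by (simp add: coeff_map_poly)
    qed
  qed
qed


lemma generic:
  fixes ZA ZB ZC :: "nat \<Rightarrow> bool list" and tA tB tC :: "rat poly poly"
  assumes okA: "\<And>\<pi> a. a \<ge> 1 \<Longrightarrow> poly (omega_poly n ZA \<pi>) (of_nat a) = of_nat (Ncount n \<pi> (ZA a))"
    and okB: "\<And>\<pi> a. a \<ge> 1 \<Longrightarrow> poly (omega_poly n ZB \<pi>) (of_nat a) = of_nat (Ncount n \<pi> (ZB a))"
    and okC: "\<And>\<pi> a. a \<ge> 1 \<Longrightarrow> poly (omega_poly n ZC \<pi>) (of_nat a) = of_nat (Ncount n \<pi> (ZC a))"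
    and vals: "\<And>k m. k \<ge> 1 \<Longrightarrow> m \<ge> 1 \<Longrightarrow> \<exists>a b c. a \<ge> 1 \<and> b \<ge> 1 \<and> c \<ge> 1 \<and>
        ev (of_nat (2 * k)) (of_nat (2 * m + 1)) tA = of_nat a \<and>
        ev (of_nat (2 * k)) (of_nat (2 * m + 1)) tB = of_nat b \<and>
        ev (of_nat (2 * k)) (of_nat (2 * m + 1)) tC = of_nat c \<and>
        prodZ (ZA a) (ZB b) = ZC c \<and> 0 < length (ZA a)"
  shows "galg_mult n (gen_series n ZA tA) (gen_series n ZB tB) = gen_series n ZC tC"
proof (rule ext)
  fix \<sigma> :: "nat \<Rightarrow> nat"
  define P where "P = {p. p permutes {1..n}}"
  show "galg_mult n (gen_series n ZA tA) (gen_series n ZB tB) \<sigma> = gen_series n ZC tC \<sigma>"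
  proof (cases "\<sigma> permutes {1..n}")
    case False
    have "galg_mult n (gen_series n ZA tA) (gen_series n ZB tB) \<sigma> = 0"
      unfolding galg_mult_def
    proof (intro sum.neutral ballI)
      fix \<tau> \<upsilon> assume t: "\<tau> \<in> {p. p permutes {1..n}}" and u: "\<upsilon> \<in> {p. p permutes {1..n}}"
      have "\<tau> \<circ> \<upsilon> permutes {1..n}" using permutes_compose[of \<upsilon> "{1..n}" \<tau>] t u by simp
      then have "\<tau> \<circ> \<upsilon> \<noteq> \<sigma>" using False by auto
      then show "(if \<tau> \<circ> \<upsilon> = \<sigma> then gen_series n ZA tA \<tau> * gen_series n ZB tB \<upsilon> else 0) = 0" by simp
    qed
    then show ?thesis using False by (simp add: gen_series_def)
  next
    case True
    define D where "D = galg_mult n (gen_series n ZA tA) (gen_series n ZB tB) \<sigma> - gen_series n ZC tC \<sigma>"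
    have "D = 0"
    proof (rule bivar_zero)
      fix k m :: nat assume k: "k \<ge> 1" and m: "m \<ge> 1"
      define x where "x = (of_nat (2 * k) :: rat)"
      define y where "y = (of_nat (2 * m + 1) :: rat)"
      obtain a b c where abc: "a \<ge> 1" "b \<ge> 1" "c \<ge> 1" "ev x y tA = of_nat a" "ev x y tB = of_nat b"
        "ev x y tC = of_nat c" "prodZ (ZA a) (ZB b) = ZC c" "0 < length (ZA a)"
        using vals[OF k m] unfolding x_def y_def by blast
      have eA: "ev x y (gen_series n ZA tA \<tau>) = of_nat (Ncount n \<tau> (ZA a))" if "\<tau> \<in> P" for \<tau>
        using that abc okA[OF abc(1)] by (simp add: gen_series_def P_def)
      have eB: "ev x y (gen_series n ZB tB \<tau>) = of_nat (Ncount n \<tau> (ZB b))" if "\<tau> \<in> P" for \<tau>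
        using that abc okB[OF abc(2)] by (simp add: gen_series_def P_def)
      have eC: "ev x y (gen_series n ZC tC \<sigma>) = of_nat (Ncount n \<sigma> (ZC c))"
        using True abc okC[OF abc(3)] by (simp add: gen_series_def)
      have "ev x y (galg_mult n (gen_series n ZA tA) (gen_series n ZB tB) \<sigma>)
          = (\<Sum>\<tau>\<in>P. \<Sum>\<upsilon>\<in>P. if \<tau> \<circ> \<upsilon> = \<sigma> then of_nat (Ncount n \<tau> (ZA a)) * of_nat (Ncount n \<upsilon> (ZB b)) else 0)"
        unfolding galg_mult_def P_def[symmetric] ev_sum
        by (intro sum.cong refl) (simp add: ev_if eA eB)
      also have "\<dots> = of_nat (\<Sum>\<tau>\<in>P. \<Sum>\<upsilon>\<in>P. if \<tau> \<circ> \<upsilon> = \<sigma> then Ncount n \<tau> (ZA a) * Ncount n \<upsilon> (ZB b) else 0)"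
        unfolding of_nat_sum by (intro sum.cong refl) simp
      also have "\<dots> = of_nat (Ncount n \<sigma> (ZC c))"
        using prod_count[OF abc(8) True, of "ZB b"] abc(7) unfolding P_def by simp
      finally show "ev (of_nat (2 * k)) (of_nat (2 * m + 1)) D = 0"
        unfolding D_def x_def[symmetric] y_def[symmetric] using eC by simp
    qed
    then show ?thesis unfolding D_def by simp
  qed
qed

lemma ev_half_x: "ev (of_nat (2 * k)) y (cst (1/2) * Xv) = of_nat k" by simp
lemma ev_half_y: "ev x (of_nat (2 * m + 1)) (cst (1/2) * (Yv - 1)) = of_nat m" by simp
lemma ev_half_xy: "ev (of_nat (2 * k)) (of_nat (2 * m + 1)) (cst (1/2) * (Xv * Yv)) = of_nat (k * (2 * m + 1))"
  by (simp add: algebra_simps)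


lemma case1: "galg_mult n (rho n Xv) (rho_l n Yv) = rho n (Xv * Yv)"
  unfolding rho_def rho_bar_def rho_l_def rho_r_def
proof (rule generic)
  fix k m :: nat assume k: "k \<ge> 1" and m: "m \<ge> 1"
  have L: "0 < length (Z_prime k)" using k m by (simp add: Z_prime_map Z_left_map Z_right_map Z_bar_def)
  show "\<exists>a b c. a \<ge> 1 \<and> b \<ge> 1 \<and> c \<ge> 1 \<and>
        ev (of_nat (2 * k)) (of_nat (2 * m + 1)) (cst (1/2) * Xv) = of_nat a \<and>
        ev (of_nat (2 * k)) (of_nat (2 * m + 1)) (cst (1/2) * (Yv - 1)) = of_nat b \<and>
        ev (of_nat (2 * k)) (of_nat (2 * m + 1)) (cst (1/2) * (Xv * Yv)) = of_nat c \<and>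
        prodZ (Z_prime a) (Z_left b) = Z_prime c \<and> 0 < length (Z_prime a)"
    using k m L id1[OF k] by (intro exI[of _ k] exI[of _ m] exI[of _ "k * (2 * m + 1)"]) (simp add: algebra_simps)
qed (fact omega_prime omega_left omega_prime)+

lemma case2: "galg_mult n (rho_l n Yv) (rho n Xv) = rho n (Xv * Yv)"
  unfolding rho_def rho_bar_def rho_l_def rho_r_def
proof (rule generic)
  fix k m :: nat assume k: "k \<ge> 1" and m: "m \<ge> 1"
  have L: "0 < length (Z_left m)" using k m by (simp add: Z_prime_map Z_left_map Z_right_map Z_bar_def)
  show "\<exists>a b c. a \<ge> 1 \<and> b \<ge> 1 \<and> c \<ge> 1 \<and>
        ev (of_nat (2 * k)) (of_nat (2 * m + 1)) (cst (1/2) * (Yv - 1)) = of_nat a \<and>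
        ev (of_nat (2 * k)) (of_nat (2 * m + 1)) (cst (1/2) * Xv) = of_nat b \<and>
        ev (of_nat (2 * k)) (of_nat (2 * m + 1)) (cst (1/2) * (Xv * Yv)) = of_nat c \<and>
        prodZ (Z_left a) (Z_prime b) = Z_prime c \<and> 0 < length (Z_left a)"
    using k m L id2[OF k] by (intro exI[of _ m] exI[of _ k] exI[of _ "k * (2 * m + 1)"]) (simp add: algebra_simps)
qed (fact omega_left omega_prime omega_prime)+

lemma case3: "galg_mult n (rho_bar n Xv) (rho_l n Yv) = rho_bar n (Xv * Yv)"
  unfolding rho_def rho_bar_def rho_l_def rho_r_def
proof (rule generic)
  fix k m :: nat assume k: "k \<ge> 1" and m: "m \<ge> 1"
  have L: "0 < length (Z_bar k)" using k m by (simp add: Z_prime_map Z_left_map Z_right_map Z_bar_def)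
  show "\<exists>a b c. a \<ge> 1 \<and> b \<ge> 1 \<and> c \<ge> 1 \<and>
        ev (of_nat (2 * k)) (of_nat (2 * m + 1)) (cst (1/2) * Xv) = of_nat a \<and>
        ev (of_nat (2 * k)) (of_nat (2 * m + 1)) (cst (1/2) * (Yv - 1)) = of_nat b \<and>
        ev (of_nat (2 * k)) (of_nat (2 * m + 1)) (cst (1/2) * (Xv * Yv)) = of_nat c \<and>
        prodZ (Z_bar a) (Z_left b) = Z_bar c \<and> 0 < length (Z_bar a)"
    using k m L id3[OF k] by (intro exI[of _ k] exI[of _ m] exI[of _ "k * (2 * m + 1)"]) (simp add: algebra_simps)
qed (fact omega_bar omega_left omega_bar)+

lemma case4: "galg_mult n (rho_l n Yv) (rho_bar n Xv) = rho_bar n (Xv * Yv)"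
  unfolding rho_def rho_bar_def rho_l_def rho_r_def
proof (rule generic)
  fix k m :: nat assume k: "k \<ge> 1" and m: "m \<ge> 1"
  have L: "0 < length (Z_left m)" using k m by (simp add: Z_prime_map Z_left_map Z_right_map Z_bar_def)
  show "\<exists>a b c. a \<ge> 1 \<and> b \<ge> 1 \<and> c \<ge> 1 \<and>
        ev (of_nat (2 * k)) (of_nat (2 * m + 1)) (cst (1/2) * (Yv - 1)) = of_nat a \<and>
        ev (of_nat (2 * k)) (of_nat (2 * m + 1)) (cst (1/2) * Xv) = of_nat b \<and>
        ev (of_nat (2 * k)) (of_nat (2 * m + 1)) (cst (1/2) * (Xv * Yv)) = of_nat c \<and>
        prodZ (Z_left a) (Z_bar b) = Z_bar c \<and> 0 < length (Z_left a)"
    using k m L id4[OF k] by (intro exI[of _ m] exI[of _ k] exI[of _ "k * (2 * m + 1)"]) (simp add: algebra_simps)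
qed (fact omega_left omega_bar omega_bar)+

lemma case5: "galg_mult n (rho n Xv) (rho_r n Yv) = rho n (Xv * Yv)"
  unfolding rho_def rho_bar_def rho_l_def rho_r_def
proof (rule generic)
  fix k m :: nat assume k: "k \<ge> 1" and m: "m \<ge> 1"
  have L: "0 < length (Z_prime k)" using k m by (simp add: Z_prime_map Z_left_map Z_right_map Z_bar_def)
  show "\<exists>a b c. a \<ge> 1 \<and> b \<ge> 1 \<and> c \<ge> 1 \<and>
        ev (of_nat (2 * k)) (of_nat (2 * m + 1)) (cst (1/2) * Xv) = of_nat a \<and>
        ev (of_nat (2 * k)) (of_nat (2 * m + 1)) (cst (1/2) * (Yv - 1)) = of_nat b \<and>
        ev (of_nat (2 * k)) (of_nat (2 * m + 1)) (cst (1/2) * (Xv * Yv)) = of_nat c \<and>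
        prodZ (Z_prime a) (Z_right b) = Z_prime c \<and> 0 < length (Z_prime a)"
    using k m L id5[OF k] by (intro exI[of _ k] exI[of _ m] exI[of _ "k * (2 * m + 1)"]) (simp add: algebra_simps)
qed (fact omega_prime omega_right omega_prime)+

lemma case6: "galg_mult n (rho_r n Yv) (rho_bar n Xv) = rho n (Xv * Yv)"
  unfolding rho_def rho_bar_def rho_l_def rho_r_def
proof (rule generic)
  fix k m :: nat assume k: "k \<ge> 1" and m: "m \<ge> 1"
  have L: "0 < length (Z_right m)" using k m by (simp add: Z_prime_map Z_left_map Z_right_map Z_bar_def)
  show "\<exists>a b c. a \<ge> 1 \<and> b \<ge> 1 \<and> c \<ge> 1 \<and>
        ev (of_nat (2 * k)) (of_nat (2 * m + 1)) (cst (1/2) * (Yv - 1)) = of_nat a \<and>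
        ev (of_nat (2 * k)) (of_nat (2 * m + 1)) (cst (1/2) * Xv) = of_nat b \<and>
        ev (of_nat (2 * k)) (of_nat (2 * m + 1)) (cst (1/2) * (Xv * Yv)) = of_nat c \<and>
        prodZ (Z_right a) (Z_bar b) = Z_prime c \<and> 0 < length (Z_right a)"
    using k m L id6[OF k] by (intro exI[of _ m] exI[of _ k] exI[of _ "k * (2 * m + 1)"]) (simp add: algebra_simps)
qed (fact omega_right omega_bar omega_prime)+

lemma case7: "galg_mult n (rho_bar n Xv) (rho_r n Yv) = rho_bar n (Xv * Yv)"
  unfolding rho_def rho_bar_def rho_l_def rho_r_def
proof (rule generic)
  fix k m :: nat assume k: "k \<ge> 1" and m: "m \<ge> 1"
  have L: "0 < length (Z_bar k)" using k m by (simp add: Z_prime_map Z_left_map Z_right_map Z_bar_def)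
  show "\<exists>a b c. a \<ge> 1 \<and> b \<ge> 1 \<and> c \<ge> 1 \<and>
        ev (of_nat (2 * k)) (of_nat (2 * m + 1)) (cst (1/2) * Xv) = of_nat a \<and>
        ev (of_nat (2 * k)) (of_nat (2 * m + 1)) (cst (1/2) * (Yv - 1)) = of_nat b \<and>
        ev (of_nat (2 * k)) (of_nat (2 * m + 1)) (cst (1/2) * (Xv * Yv)) = of_nat c \<and>
        prodZ (Z_bar a) (Z_right b) = Z_bar c \<and> 0 < length (Z_bar a)"
    using k m L id7[OF k] by (intro exI[of _ k] exI[of _ m] exI[of _ "k * (2 * m + 1)"]) (simp add: algebra_simps)
qed (fact omega_bar omega_right omega_bar)+

lemma case8: "galg_mult n (rho_r n Yv) (rho n Xv) = rho_bar n (Xv * Yv)"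
  unfolding rho_def rho_bar_def rho_l_def rho_r_def
proof (rule generic)
  fix k m :: nat assume k: "k \<ge> 1" and m: "m \<ge> 1"
  have L: "0 < length (Z_right m)" using k m by (simp add: Z_prime_map Z_left_map Z_right_map Z_bar_def)
  show "\<exists>a b c. a \<ge> 1 \<and> b \<ge> 1 \<and> c \<ge> 1 \<and>
        ev (of_nat (2 * k)) (of_nat (2 * m + 1)) (cst (1/2) * (Yv - 1)) = of_nat a \<and>
        ev (of_nat (2 * k)) (of_nat (2 * m + 1)) (cst (1/2) * Xv) = of_nat b \<and>
        ev (of_nat (2 * k)) (of_nat (2 * m + 1)) (cst (1/2) * (Xv * Yv)) = of_nat c \<and>
        prodZ (Z_right a) (Z_prime b) = Z_bar c \<and> 0 < length (Z_right a)"
    using k m L id8[OF k] by (intro exI[of _ m] exI[of _ k] exI[of _ "k * (2 * m + 1)"]) (simp add: algebra_simps)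
qed (fact omega_right omega_prime omega_bar)+


theorem theorem3p5:
  fixes n :: nat
  assumes "n \<ge> 1"
  shows "galg_mult n (rho n Xv) (rho_l n Yv) = rho n (Xv * Yv) \<and>
    galg_mult n (rho_l n Yv) (rho n Xv) = rho n (Xv * Yv) \<and>
    galg_mult n (rho_bar n Xv) (rho_l n Yv) = rho_bar n (Xv * Yv) \<and>
    galg_mult n (rho_l n Yv) (rho_bar n Xv) = rho_bar n (Xv * Yv) \<and>
    galg_mult n (rho n Xv) (rho_r n Yv) = rho n (Xv * Yv) \<and>
    galg_mult n (rho_r n Yv) (rho_bar n Xv) = rho n (Xv * Yv) \<and>
    galg_mult n (rho_bar n Xv) (rho_r n Yv) = rho_bar n (Xv * Yv) \<and>
    galg_mult n (rho_r n Yv) (rho n Xv) = rho_bar n (Xv * Yv)"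
  using case1 case2 case3 case4 case5 case6 case7 case8 by blast

end
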